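(* Let $\Bbbk$ be algebraically closed, $T$ a torus acting linearly on a finite-dimensional $\Bbbk$-vector space $V$, $X\subseteq\mathbb PV$ a closed $T$-invariant subscheme with $X^T$ finite, and $S:\mathbb G_m\to T$ with $X^S=X^T$. If $X=\bigcup_iX_i$ is the decomposition into irreducible components, then $\Delta(X,S)=\bigcup_i\Delta(X_i,S)$.
   Context: For a closed $S$-invariant $Z\subseteq\mathbb PV$ with finitely many fixed points and $f\in Z^S$, $Z_f=\{z\in Z:\lim_{t\to0}S(t)z=f\}$ is the B-B stratum; $\overline{Z_\emptyset}=Z$, $\overline{Z_{f_0,\ldots,f_k}}=\overline{\overline{Z_{f_0,\ldots,f_{k-1}}}\cap Z_{f_k}}$. A closure chain of $Z$ is a nonrepeating $(f_0,\ldots,f_k)$ in $Z^S$ with $\overline{Z_{f_0,\ldots,f_k}}\ne\emptyset$, and $\Delta(Z,S)$ is the simplicial complex of closure chains regarded as subsets of $Z^S$. *)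

theory Defs
  imports Main "HOL-Computational_Algebra.Polynomial"
begin

definition alg_closed :: "'k::field itself \<Rightarrow> bool" where
  "alg_closed _ \<longleftrightarrow> (\<forall>p::'k poly. 0 < degree p \<longrightarrow> (\<exists>x. poly p x = 0))"

definition smul :: "'k::field \<Rightarrow> ('n \<Rightarrow> 'k) \<Rightarrow> ('n \<Rightarrow> 'k)" where
  "smul c v = (\<lambda>j. c * v j)"

text \<open>A point of P(V) is represented by the set of nonzero vectors spanning the line.\<close>
definition proj_pt :: "('n \<Rightarrow> 'k::field) \<Rightarrow> ('n \<Rightarrow> 'k) set" where
  "proj_pt v = {smul c v | c. c \<noteq> 0}"

definition PV :: "('n \<Rightarrow> 'k::field) set set" where
  "PV = proj_pt ` {v. v \<noteq> (\<lambda>_. 0)}"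

text \<open>A polynomial in the coordinates is a finitely supported function from exponent
  vectors (monomials) to coefficients.\<close>
definition is_poly :: "(('n \<Rightarrow> nat) \<Rightarrow> 'k::field) \<Rightarrow> bool" where
  "is_poly f \<longleftrightarrow> finite {m. f m \<noteq> 0}"

definition homogeneous :: "(('n::finite \<Rightarrow> nat) \<Rightarrow> 'k::field) \<Rightarrow> bool" where
  "homogeneous f \<longleftrightarrow> is_poly f \<and> (\<exists>d. \<forall>m. f m \<noteq> 0 \<longrightarrow> (\<Sum>i\<in>UNIV. m i) = d)"

definition peval :: "(('n::finite \<Rightarrow> nat) \<Rightarrow> 'k::field) \<Rightarrow> ('n \<Rightarrow> 'k) \<Rightarrow> 'k" where
  "peval f v = (\<Sum>m\<in>{m. f m \<noteq> 0}. f m * (\<Prod>i\<in>UNIV. v i ^ m i))"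

definition proj_closed :: "('n::finite \<Rightarrow> 'k::field) set set \<Rightarrow> bool" where
  "proj_closed Z \<longleftrightarrow> (\<exists>F. (\<forall>f\<in>F. homogeneous f) \<and>
      Z = {p \<in> PV. \<forall>f\<in>F. \<forall>v\<in>p. peval f v = 0})"

definition pclosure :: "('n::finite \<Rightarrow> 'k::field) set set \<Rightarrow> ('n \<Rightarrow> 'k) set set" where
  "pclosure A = \<Inter>{Z. proj_closed Z \<and> A \<subseteq> Z}"

definition proj_irreducible :: "('n::finite \<Rightarrow> 'k::field) set set \<Rightarrow> bool" where
  "proj_irreducible Z \<longleftrightarrow> proj_closed Z \<and> Z \<noteq> {} \<and>
     (\<forall>A B. proj_closed A \<longrightarrow> proj_closed B \<longrightarrow> Z = A \<union> B \<longrightarrow> Z = A \<or> Z = B)"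

definition irr_components :: "('n::finite \<Rightarrow> 'k::field) set set \<Rightarrow> ('n \<Rightarrow> 'k) set set set" where
  "irr_components X = {C. C \<subseteq> X \<and> proj_irreducible C \<and>
      (\<forall>D. D \<subseteq> X \<longrightarrow> proj_irreducible D \<longrightarrow> C \<subseteq> D \<longrightarrow> D = C)}"

text \<open>The torus T = (k^*)^'r acts diagonally on V with weights w j :: 'r \<Rightarrow> int
  (character of the j-th basis vector).\<close>
definition torus :: "('r::finite \<Rightarrow> 'k::field) set" where
  "torus = {t. \<forall>a. t a \<noteq> 0}"

definition tact :: "('n \<Rightarrow> 'r::finite \<Rightarrow> int) \<Rightarrow> ('r \<Rightarrow> 'k::field) \<Rightarrow> ('n \<Rightarrow> 'k) \<Rightarrow> ('n \<Rightarrow> 'k)" where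
  "tact w t v = (\<lambda>j. (\<Prod>a\<in>UNIV. t a powi w j a) * v j)"

definition pact :: "('n \<Rightarrow> 'r::finite \<Rightarrow> int) \<Rightarrow> ('r \<Rightarrow> 'k::field) \<Rightarrow> ('n \<Rightarrow> 'k) set \<Rightarrow> ('n \<Rightarrow> 'k) set" where
  "pact w t p = tact w t ` p"

definition T_invariant :: "('n \<Rightarrow> 'r::finite \<Rightarrow> int) \<Rightarrow> ('n \<Rightarrow> 'k::field) set set \<Rightarrow> bool" where
  "T_invariant w X \<longleftrightarrow> (\<forall>t\<in>(torus :: ('r \<Rightarrow> 'k) set). \<forall>p\<in>X. pact w t p \<in> X)"

definition T_fixed :: "('n \<Rightarrow> 'r::finite \<Rightarrow> int) \<Rightarrow> ('n \<Rightarrow> 'k::field) set set \<Rightarrow> ('n \<Rightarrow> 'k) set set" where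
  "T_fixed w X = {p\<in>X. \<forall>t\<in>(torus :: ('r \<Rightarrow> 'k) set). pact w t p = p}"

text \<open>A one-parameter subgroup S : G_m \<rightarrow> T is given by a cocharacter lam :: 'r \<Rightarrow> int,
  S(c) = (c^(lam a))_a.\<close>
definition Sgrp :: "('r::finite \<Rightarrow> int) \<Rightarrow> 'k::field \<Rightarrow> ('r \<Rightarrow> 'k)" where
  "Sgrp lam c = (\<lambda>a. c powi lam a)"

definition S_fixed :: "('n \<Rightarrow> 'r::finite \<Rightarrow> int) \<Rightarrow> ('r \<Rightarrow> int) \<Rightarrow> ('n \<Rightarrow> 'k::field) set set \<Rightarrow> ('n \<Rightarrow> 'k) set set" where
  "S_fixed w lam X = {p\<in>X. \<forall>c::'k. c \<noteq> 0 \<longrightarrow> pact w (Sgrp lam c) p = p}"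

text \<open>Weight of the j-th coordinate under S: S(c) acts on coordinate j by c^(sweight w lam j).\<close>
definition sweight :: "('n \<Rightarrow> 'r::finite \<Rightarrow> int) \<Rightarrow> ('r \<Rightarrow> int) \<Rightarrow> 'n \<Rightarrow> int" where
  "sweight w lam j = (\<Sum>a\<in>UNIV. w j a * lam a)"

text \<open>The limit lim_{c\<rightarrow>0} S(c) p: for a representative v, S(c) v = (c^(e_j) v_j)_j;
  multiplying by c^(-m), m the minimal exponent on the support of v, gives a polynomial
  curve in V whose value at c = 0 is nonzero; its class is the limit.\<close>
definition S_limit :: "('n::finite \<Rightarrow> 'r::finite \<Rightarrow> int) \<Rightarrow> ('r \<Rightarrow> int) \<Rightarrow> ('n \<Rightarrow> 'k::field) set \<Rightarrow> ('n \<Rightarrow> 'k) set" where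
  "S_limit w lam p = (let v = (SOME v. v \<in> p);
       m = Min (sweight w lam ` {j. v j \<noteq> 0})
     in proj_pt (\<lambda>j. if sweight w lam j = m then v j else 0))"

definition BB_stratum :: "('n::finite \<Rightarrow> 'r::finite \<Rightarrow> int) \<Rightarrow> ('r \<Rightarrow> int) \<Rightarrow> ('n \<Rightarrow> 'k::field) set set
    \<Rightarrow> ('n \<Rightarrow> 'k) set \<Rightarrow> ('n \<Rightarrow> 'k) set set" where
  "BB_stratum w lam Z f = {z\<in>Z. S_limit w lam z = f}"

text \<open>chain_closure Z [f0,...,fk] = closure(Z_{f0,...,fk}); chain_closure Z [] = Z.\<close>
definition chain_closure :: "('n::finite \<Rightarrow> 'r::finite \<Rightarrow> int) \<Rightarrow> ('r \<Rightarrow> int) \<Rightarrow> ('n \<Rightarrow> 'k::field) set set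
    \<Rightarrow> ('n \<Rightarrow> 'k) set list \<Rightarrow> ('n \<Rightarrow> 'k) set set" where
  "chain_closure w lam Z fs = foldl (\<lambda>A f. pclosure (A \<inter> BB_stratum w lam Z f)) Z fs"

definition closure_chain :: "('n::finite \<Rightarrow> 'r::finite \<Rightarrow> int) \<Rightarrow> ('r \<Rightarrow> int) \<Rightarrow> ('n \<Rightarrow> 'k::field) set set
    \<Rightarrow> ('n \<Rightarrow> 'k) set list \<Rightarrow> bool" where
  "closure_chain w lam Z fs \<longleftrightarrow> distinct fs \<and> set fs \<subseteq> S_fixed w lam Z \<and> chain_closure w lam Z fs \<noteq> {}"

definition Delta :: "('n::finite \<Rightarrow> 'r::finite \<Rightarrow> int) \<Rightarrow> ('r \<Rightarrow> int) \<Rightarrow> ('n \<Rightarrow> 'k::field) set set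
    \<Rightarrow> ('n \<Rightarrow> 'k) set set set" where
  "Delta w lam Z = {set fs | fs. closure_chain w lam Z fs}"

end

theory Submission
  imports Defs "HOL-Library.List_Lexorder" "HOL-Library.FuncSet"
begin

definition supp :: "(('n \<Rightarrow> nat) \<Rightarrow> 'k::field) \<Rightarrow> ('n \<Rightarrow> nat) set" where
  "supp f = {m. f m \<noteq> 0}"
definition mon :: "('n::finite \<Rightarrow> nat) \<Rightarrow> ('n \<Rightarrow> 'k::field) \<Rightarrow> 'k" where
  "mon m v = (\<Prod>i\<in>UNIV. v i ^ m i)"
definition deg :: "('n::finite \<Rightarrow> nat) \<Rightarrow> nat" where
  "deg m = (\<Sum>i\<in>UNIV. m i)"
definition madd :: "('n \<Rightarrow> nat) \<Rightarrow> ('n \<Rightarrow> nat) \<Rightarrow> ('n \<Rightarrow> nat)" where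
  "madd a b = (\<lambda>i. a i + b i)"

lemma peval_supp: "peval f v = (\<Sum>m\<in>supp f. f m * mon m v)"
  by (simp add: peval_def supp_def mon_def)

lemma peval_superset:
  assumes "finite S" "supp f \<subseteq> S"
  shows "peval f v = (\<Sum>m\<in>S. f m * mon m v)"
  unfolding peval_supp
  by (rule sum.mono_neutral_left) (use assms in \<open>auto simp: supp_def\<close>)

lemma mon_add: "mon (madd a b) v = mon a v * mon b v"
  by (simp add: mon_def madd_def power_add prod.distrib)

lemma deg_add: "deg (madd a b) = deg a + deg b"
  by (simp add: deg_def madd_def sum.distrib)

lemma mon_smul: "mon m (smul c v) = c ^ deg m * mon m v"
  by (simp add: mon_def smul_def deg_def power_mult_distrib prod.distrib power_sum)

definition pmult :: "(('n \<Rightarrow> nat) \<Rightarrow> 'k::field) \<Rightarrow> (('n \<Rightarrow> nat) \<Rightarrow> 'k) \<Rightarrow> (('n \<Rightarrow> nat) \<Rightarrow> 'k)" where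
  "pmult f g = (\<lambda>m. \<Sum>a\<in>supp f. \<Sum>b\<in>supp g. if madd a b = m then f a * g b else 0)"

lemma supp_pmult: "supp (pmult f g) \<subseteq> (\<lambda>(a,b). madd a b) ` (supp f \<times> supp g)"
proof
  fix m assume "m \<in> supp (pmult f g)"
  hence "(\<Sum>a\<in>supp f. \<Sum>b\<in>supp g. if madd a b = m then f a * g b else 0) \<noteq> 0"
    by (simp add: supp_def pmult_def)
  then obtain a where a: "a \<in> supp f" "(\<Sum>b\<in>supp g. if madd a b = m then f a * g b else 0) \<noteq> 0"
    using sum.not_neutral_contains_not_neutral by blast
  then obtain b where b: "b \<in> supp g" "(if madd a b = m then f a * g b else 0) \<noteq> 0"
    using sum.not_neutral_contains_not_neutral by blast
  hence "madd a b = m" by (auto split: if_splits)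
  thus "m \<in> (\<lambda>(a,b). madd a b) ` (supp f \<times> supp g)" using a b by force
qed

lemma is_poly_supp: "is_poly f \<longleftrightarrow> finite (supp f)"
  by (simp add: is_poly_def supp_def)

lemma is_poly_pmult: "is_poly f \<Longrightarrow> is_poly g \<Longrightarrow> is_poly (pmult f g)"
  unfolding is_poly_supp using supp_pmult finite_subset by blast

lemma peval_pmult:
  assumes "is_poly f" "is_poly g"
  shows "peval (pmult f g) v = peval f v * peval g v"
proof -
  let ?S = "(\<lambda>(a,b). madd a b) ` (supp f \<times> supp g)"
  have fs: "finite (supp f)" "finite (supp g)" using assms by (auto simp: is_poly_supp)
  hence fS: "finite ?S" by auto
  have "peval (pmult f g) v = (\<Sum>m\<in>?S. pmult f g m * mon m v)"
    by (rule peval_superset[OF fS supp_pmult])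
  also have "\<dots> = (\<Sum>m\<in>?S. \<Sum>a\<in>supp f. \<Sum>b\<in>supp g. if madd a b = m then f a * g b * mon m v else 0)"
    unfolding pmult_def sum_distrib_right by (intro sum.cong refl) auto
  also have "\<dots> = (\<Sum>a\<in>supp f. \<Sum>b\<in>supp g. \<Sum>m\<in>?S. if madd a b = m then f a * g b * mon m v else 0)"
    by (simp add: sum.swap[of _ ?S] sum.swap[of _ _ "supp g"])
  also have "\<dots> = (\<Sum>a\<in>supp f. \<Sum>b\<in>supp g. f a * g b * mon (madd a b) v)"
  proof (intro sum.cong refl)
    fix a b assume "a \<in> supp f" "b \<in> supp g"
    hence "madd a b \<in> ?S" by force
    thus "(\<Sum>m\<in>?S. if madd a b = m then f a * g b * mon m v else 0) = f a * g b * mon (madd a b) v"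
      using fS by (simp add: sum.delta)
  qed
  also have "\<dots> = (\<Sum>a\<in>supp f. f a * mon a v) * (\<Sum>b\<in>supp g. g b * mon b v)"
    by (simp add: sum_product mon_add mult_ac)
  finally show ?thesis by (simp add: peval_supp)
qed

definition hdeg :: "(('n::finite \<Rightarrow> nat) \<Rightarrow> 'k::field) \<Rightarrow> nat \<Rightarrow> bool" where
  "hdeg f d \<longleftrightarrow> is_poly f \<and> (\<forall>m. f m \<noteq> 0 \<longrightarrow> deg m = d)"

lemma homogeneous_hdeg: "homogeneous f \<longleftrightarrow> (\<exists>d. hdeg f d)"
  by (auto simp: homogeneous_def hdeg_def deg_def)

lemma hdeg_pmult: "hdeg f d1 \<Longrightarrow> hdeg g d2 \<Longrightarrow> hdeg (pmult f g) (d1 + d2)"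
  unfolding hdeg_def
proof (intro conjI allI impI)
  assume a: "is_poly f \<and> (\<forall>m. f m \<noteq> 0 \<longrightarrow> deg m = d1)" "is_poly g \<and> (\<forall>m. g m \<noteq> 0 \<longrightarrow> deg m = d2)"
  thus "is_poly (pmult f g)" using is_poly_pmult by blast
  fix m assume "pmult f g m \<noteq> 0"
  hence "m \<in> supp (pmult f g)" by (simp add: supp_def)
  then obtain x y where "x \<in> supp f" "y \<in> supp g" "m = madd x y" using supp_pmult[of f g] by auto
  thus "deg m = d1 + d2" using a by (simp add: deg_add supp_def)
qed

lemma homogeneous_pmult: "homogeneous f \<Longrightarrow> homogeneous g \<Longrightarrow> homogeneous (pmult f g)"
  using hdeg_pmult homogeneous_hdeg by metis

lemma peval_smul_hdeg: assumes "hdeg f d" shows "peval f (smul c v) = c ^ d * peval f v"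
proof -
  have "peval f (smul c v) = (\<Sum>m\<in>supp f. f m * (c ^ deg m * mon m v))"
    by (simp add: peval_supp mon_smul)
  also have "\<dots> = (\<Sum>m\<in>supp f. c ^ d * (f m * mon m v))"
    using assms by (intro sum.cong) (auto simp: hdeg_def supp_def)
  finally show ?thesis by (simp add: peval_supp sum_distrib_left)
qed

section \<open>Dickson\<close>

lemma nat_incseq_sub:
  fixes g :: "nat \<Rightarrow> nat"
  shows "\<exists>r::nat\<Rightarrow>nat. strict_mono r \<and> (\<forall>i j. i \<le> j \<longrightarrow> g (r i) \<le> g (r j))"
proof -
  obtain r :: "nat \<Rightarrow> nat" where r: "strict_mono r" "monoseq (\<lambda>n. g (r n))" using seq_monosub by blast
  have "(\<forall>m. \<forall>n\<ge>m. g (r m) \<le> g (r n)) \<or> (\<forall>m. \<forall>n\<ge>m. g (r n) \<le> g (r m))"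
    using r(2) unfolding monoseq_def .
  thus ?thesis
  proof
    assume "\<forall>m. \<forall>n\<ge>m. g (r m) \<le> g (r n)"
    note inc = this
    show ?thesis
    proof (intro exI[where x=r] conjI)
      show "strict_mono r" by (rule r(1))
      show "\<forall>i j. i \<le> j \<longrightarrow> g (r i) \<le> g (r j)" using inc by simp
    qed
  next
    assume dec: "\<forall>m. \<forall>n\<ge>m. g (r n) \<le> g (r m)"
    let ?h = "\<lambda>n. g (r n)"
    have fin: "finite (range ?h)"
    proof (rule finite_subset[of _ "{..g (r 0)}"])
      show "range ?h \<subseteq> {..g (r 0)}" using dec by auto
    qed simp
    hence "Min (range ?h) \<in> range ?h" by (intro Min_in) auto
    then obtain N where N0: "?h N = Min (range ?h)" by auto
    have N: "\<And>n. ?h N \<le> ?h n" unfolding N0 using fin by simp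
    have const: "\<And>n. N \<le> n \<Longrightarrow> ?h n = ?h N"
    proof -
      fix n assume "N \<le> n"
      hence "?h n \<le> ?h N" using dec by blast
      thus "?h n = ?h N" using N[of n] by simp
    qed
    show ?thesis
    proof (intro exI conjI allI impI)
      show "strict_mono (\<lambda>n. r (n + N))" using r(1) by (simp add: strict_mono_def)
      fix i j :: nat assume "i \<le> j"
      show "g (r (i + N)) \<le> g (r (j + N))" using const[of "i+N"] const[of "j+N"] by simp
    qed
  qed
qed

lemma dickson_sub:
  fixes f :: "nat \<Rightarrow> 'a \<Rightarrow> nat"
  assumes "finite S"
  shows "\<exists>r::nat\<Rightarrow>nat. strict_mono r \<and> (\<forall>i j. i \<le> j \<longrightarrow> (\<forall>x\<in>S. f (r i) x \<le> f (r j) x))"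
  using assms
proof (induction S rule: finite_induct)
  case empty
  show ?case by (rule exI[where x="\<lambda>n. n"]) (simp add: strict_mono_def)
next
  case (insert a S)
  obtain r :: "nat \<Rightarrow> nat" where r: "strict_mono r" "\<forall>i j. i \<le> j \<longrightarrow> (\<forall>x\<in>S. f (r i) x \<le> f (r j) x)"
    using insert.IH by (elim exE conjE) (rule that; assumption)
  obtain r2 :: "nat \<Rightarrow> nat" where r2: "strict_mono r2" "\<forall>i j. i \<le> j \<longrightarrow> f (r (r2 i)) a \<le> f (r (r2 j)) a"
    using nat_incseq_sub[of "\<lambda>n. f (r n) a"] by (elim exE conjE) (rule that; assumption)
  show ?case
  proof (rule exI[where x="r \<circ> r2"], intro conjI allI impI ballI)
    show "strict_mono (r \<circ> r2)" using r(1) r2(1) by (simp add: strict_mono_def)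
    fix i j :: nat and x assume ij: "i \<le> j" and x: "x \<in> insert a S"
    have "r2 i \<le> r2 j" using r2(1) ij by (simp add: strict_mono_less_eq)
    show "f ((r \<circ> r2) i) x \<le> f ((r \<circ> r2) j) x"
    proof (cases "x = a")
      case True thus ?thesis using r2(2) ij by simp
    next
      case False
      hence "x \<in> S" using x by simp
      thus ?thesis using r(2) \<open>r2 i \<le> r2 j\<close> by simp
    qed
  qed
qed

lemma dickson:
  fixes f :: "nat \<Rightarrow> 'n::finite \<Rightarrow> nat"
  shows "\<exists>i j. i < j \<and> (\<forall>x. f i x \<le> f j x)"
proof -
  obtain r :: "nat \<Rightarrow> nat" where r: "strict_mono r" "\<forall>i j. i \<le> j \<longrightarrow> (\<forall>x\<in>UNIV. f (r i) x \<le> f (r j) x)"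
    using dickson_sub[OF finite_UNIV, of f] by (elim exE conjE) (rule that; assumption)
  show ?thesis
    by (rule exI[where x="r 0"], rule exI[where x="r 1"]) (use r in \<open>auto simp: strict_mono_def\<close>)
qed

lemma upclosed_acc:
  fixes L :: "nat \<Rightarrow> ('n::finite \<Rightarrow> nat) set"
  assumes mono: "\<And>k. L k \<subseteq> L (Suc k)"
    and up: "\<And>k m m'. m \<in> L k \<Longrightarrow> (\<forall>x. m x \<le> m' x) \<Longrightarrow> m' \<in> L k"
  shows "\<not> (\<forall>k. L k \<subset> L (Suc k))"
proof
  assume strict: "\<forall>k. L k \<subset> L (Suc k)"
  hence "\<forall>k. \<exists>m. m \<in> L (Suc k) \<and> m \<notin> L k" by blast
  from choice[OF this] obtain m where m0: "\<forall>k. m k \<in> L (Suc k) \<and> m k \<notin> L k" by (elim exE)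
  hence m: "\<And>k. m k \<in> L (Suc k)" "\<And>k. m k \<notin> L k" by auto
  obtain i j where ij: "i < j" "\<forall>x. m i x \<le> m j x" using dickson[of m] by blast
  have "L (Suc i) \<subseteq> L j" by (rule lift_Suc_mono_le[where f=L]) (use mono ij(1) in auto)
  hence "m i \<in> L j" using m(1)[of i] by (rule subsetD)
  hence "m j \<in> L j" by (rule up) (use ij(2) in simp)
  thus False using m(2) by blast
qed

section \<open>Monomial order\<close>

definition enum_n :: "'n::finite list" where
  "enum_n = (SOME xs. set xs = UNIV \<and> distinct xs)"

lemma enum_n: "set (enum_n::'n::finite list) = UNIV"
  using someI_ex[OF finite_distinct_list[OF finite_UNIV[where 'a='n]]] unfolding enum_n_def by blast

definition key :: "('n::finite \<Rightarrow> nat) \<Rightarrow> nat list" where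
  "key m = deg m # map m enum_n"

lemma key_inj: "key a = key b \<Longrightarrow> a = b"
  unfolding key_def using enum_n by (auto simp: map_eq_conv)

lemma map_madd_less: "map a xs < map b xs \<Longrightarrow> map (madd a c) xs < map (madd b c) xs"
  by (induction xs) (auto simp: madd_def)

lemma key_madd_less: "key a < key b \<Longrightarrow> key (madd a c) < key (madd b c)"
  unfolding key_def by (auto simp: deg_add map_madd_less)

lemma key_madd_le: "key a \<le> key b \<Longrightarrow> key (madd a c) \<le> key (madd b c)"
  using key_madd_less key_inj by (metis order.order_iff_strict)

lemma key_less_deg: "key a < key b \<Longrightarrow> deg a \<le> deg b"
  unfolding key_def by auto

lemma madd_comm: "madd a b = madd b a"
  by (simp add: madd_def add.commute)

lemma finite_bounded: "finite {m::'n::finite \<Rightarrow> nat. deg m \<le> D}"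
proof -
  have "{m::'n \<Rightarrow> nat. deg m \<le> D} \<subseteq> {m. \<forall>x. m x \<in> {..D}}"
  proof (rule subsetI, unfold mem_Collect_eq, rule allI)
    fix m :: "'n \<Rightarrow> nat" and x assume "deg m \<le> D"
    moreover have "m x \<le> deg m" unfolding deg_def by (rule member_le_sum) auto
    ultimately show "m x \<in> {..D}" by simp
  qed
  moreover have "{m::'n \<Rightarrow> nat. \<forall>x. m x \<in> {..D}} = Pi\<^sub>E UNIV (\<lambda>_. {..D})"
    by (auto simp: PiE_def Pi_def extensional_def)
  moreover have "finite (Pi\<^sub>E (UNIV::'n set) (\<lambda>_. {..D}))" by (rule finite_PiE) auto
  ultimately show ?thesis using finite_subset by metis
qed

lemma wf_key: "wf {(a::'n::finite \<Rightarrow> nat, b). key a < key b}"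
proof (rule ccontr)
  assume "\<not> ?thesis"
  then obtain f :: "nat \<Rightarrow> 'n \<Rightarrow> nat" where f: "\<And>i. key (f (Suc i)) < key (f i)"
    unfolding wf_iff_no_infinite_down_chain by auto
  have dec: "i < j \<Longrightarrow> key (f j) < key (f i)" for i j
  proof (induction j)
    case 0 thus ?case by simp
  next
    case (Suc j) thus ?case using f[of j] by (metis less_Suc_eq order.strict_trans)
  qed
  have degb: "deg (f i) \<le> deg (f 0)" for i
    by (induction i) (use f key_less_deg le_trans in blast)+
  have "inj f"
  proof (rule injI)
    fix i j assume "f i = f j"
    thus "i = j" using dec[of i j] dec[of j i] by (metis less_irrefl nat_neq_iff)
  qed
  moreover have "range f \<subseteq> {m. deg m \<le> deg (f 0)}" using degb by auto
  ultimately have "finite (UNIV::nat set)"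
    using finite_bounded finite_subset finite_imageD by metis
  thus False by simp
qed

section \<open>Leading monomials\<close>

definition LM :: "(('n::finite \<Rightarrow> nat) \<Rightarrow> 'k::field) \<Rightarrow> ('n \<Rightarrow> nat)" where
  "LM f = inv_into (supp f) key (Max (key ` supp f))"

lemma LM_props:
  assumes "finite (supp f)" "supp f \<noteq> {}"
  shows "LM f \<in> supp f" "\<And>m. m \<in> supp f \<Longrightarrow> key m \<le> key (LM f)"
proof -
  have M: "Max (key ` supp f) \<in> key ` supp f" using assms by simp
  show "LM f \<in> supp f" unfolding LM_def using M by (rule inv_into_into)
  have "key (LM f) = Max (key ` supp f)" unfolding LM_def using M by (rule f_inv_into_f)
  thus "\<And>m. m \<in> supp f \<Longrightarrow> key m \<le> key (LM f)" using assms by simp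
qed

lemma LM_unique:
  assumes "finite (supp f)" "m \<in> supp f" "\<And>m'. m' \<in> supp f \<Longrightarrow> key m' \<le> key m"
  shows "LM f = m"
proof -
  have ne: "supp f \<noteq> {}" using assms by blast
  have "key (LM f) \<le> key m" using assms(3) LM_props(1)[OF assms(1) ne] by blast
  moreover have "key m \<le> key (LM f)" using LM_props(2)[OF assms(1) ne assms(2)] .
  ultimately show ?thesis using key_inj by (metis order_antisym)
qed

definition shift :: "('n \<Rightarrow> nat) \<Rightarrow> (('n \<Rightarrow> nat) \<Rightarrow> 'k::field) \<Rightarrow> (('n \<Rightarrow> nat) \<Rightarrow> 'k)" where
  "shift a f = (\<lambda>m. if (\<forall>i. a i \<le> m i) then f (\<lambda>i. m i - a i) else 0)"

lemma supp_shift: "supp (shift a f) = madd a ` supp f"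
proof safe
  fix m assume "m \<in> supp (shift a f)"
  hence m: "\<forall>i. a i \<le> m i" "f (\<lambda>i. m i - a i) \<noteq> 0" by (auto simp: supp_def shift_def split: if_splits)
  have "m = madd a (\<lambda>i. m i - a i)" using m(1) by (auto simp: madd_def)
  thus "m \<in> madd a ` supp f" using m(2) by (auto simp: supp_def)
next
  fix m assume "m \<in> supp f"
  thus "madd a m \<in> supp (shift a f)" by (simp add: supp_def shift_def madd_def)
qed

lemma peval_shift: "is_poly f \<Longrightarrow> peval (shift a f) v = mon a v * peval f v"
proof -
  assume p: "is_poly f"
  have inj: "inj_on (madd a) (supp f)" by (rule inj_onI) (auto simp: madd_def fun_eq_iff)
  have "peval (shift a f) v = (\<Sum>m\<in>madd a ` supp f. shift a f m * mon m v)"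
    by (simp add: peval_supp supp_shift)
  also have "\<dots> = (\<Sum>m\<in>supp f. shift a f (madd a m) * mon (madd a m) v)"
    by (rule sum.reindex[OF inj, unfolded comp_def])
  also have "\<dots> = (\<Sum>m\<in>supp f. mon a v * (f m * mon m v))"
    by (simp add: shift_def madd_def mon_add[unfolded madd_def] mult_ac)
  finally show ?thesis by (simp add: peval_supp sum_distrib_left)
qed

lemma LM_shift:
  assumes "finite (supp f)" "supp f \<noteq> {}"
  shows "LM (shift a f) = madd a (LM f)"
proof (rule LM_unique)
  show "finite (supp (shift a f))" using assms by (simp add: supp_shift)
  show "madd a (LM f) \<in> supp (shift a f)" using LM_props(1)[OF assms] by (simp add: supp_shift)
  fix m' assume "m' \<in> supp (shift a f)"
  then obtain m where "m \<in> supp f" "m' = madd a m" by (auto simp: supp_shift)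
  thus "key m' \<le> key (madd a (LM f))"
    using LM_props(2)[OF assms] key_madd_le madd_comm by metis
qed

definition pideal :: "(('n::finite \<Rightarrow> nat) \<Rightarrow> 'k::field) set \<Rightarrow> bool" where
  "pideal I \<longleftrightarrow> (\<forall>f\<in>I. is_poly f) \<and> (\<lambda>_. 0) \<in> I \<and> (\<forall>f\<in>I. \<forall>g\<in>I. (\<lambda>m. f m - g m) \<in> I)
     \<and> (\<forall>f\<in>I. \<forall>c. (\<lambda>m. c * f m) \<in> I) \<and> (\<forall>f\<in>I. \<forall>a. shift a f \<in> I)"

definition LMs :: "(('n::finite \<Rightarrow> nat) \<Rightarrow> 'k::field) set \<Rightarrow> ('n \<Rightarrow> nat) set" where
  "LMs I = {LM f | f. f \<in> I \<and> f \<noteq> (\<lambda>_. 0)}"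

lemma supp_ne: "f \<noteq> (\<lambda>_. 0) \<Longrightarrow> supp f \<noteq> {}"
  by (auto simp: supp_def)

lemma LMs_up:
  assumes I: "pideal I" and m: "m \<in> LMs I" and le: "\<forall>x. m x \<le> m' x"
  shows "m' \<in> LMs I"
proof -
  obtain f where f: "f \<in> I" "f \<noteq> (\<lambda>_. 0)" "m = LM f" using m by (auto simp: LMs_def)
  have fin: "finite (supp f)" using I f by (simp add: pideal_def is_poly_supp)
  let ?a = "\<lambda>i. m' i - m i"
  have "shift ?a f \<in> I" using I f by (simp add: pideal_def)
  moreover have "supp (shift ?a f) \<noteq> {}" using supp_ne[OF f(2)] by (simp add: supp_shift)
  hence "shift ?a f \<noteq> (\<lambda>_. 0)" by (auto simp: supp_def)
  moreover have "LM (shift ?a f) = m'"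
    using LM_shift[OF fin supp_ne[OF f(2)]] f(3) le by (auto simp: madd_def fun_eq_iff)
  ultimately show ?thesis unfolding LMs_def mem_Collect_eq by (intro exI[where x="shift ?a f"]) auto
qed

lemma pideal_add: "pideal I \<Longrightarrow> f \<in> I \<Longrightarrow> g \<in> I \<Longrightarrow> (\<lambda>m. f m + g m) \<in> I"
proof -
  assume I: "pideal I" "f \<in> I" "g \<in> I"
  have "\<forall>c. (\<lambda>m. c * g m) \<in> I" using I by (simp add: pideal_def)
  hence gg: "(\<lambda>m. (-1) * g m) \<in> I" by (rule spec)
  have "\<forall>h\<in>I. (\<lambda>m. f m - h m) \<in> I" using I by (simp add: pideal_def)
  hence "(\<lambda>m. f m - (-1) * g m) \<in> I" using gg by (rule bspec)
  thus ?thesis by simp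
qed

lemma pideal_eq:
  assumes I: "pideal I" and J: "pideal J" and sub: "I \<subseteq> J" and L: "LMs J \<subseteq> LMs I"
  shows "J \<subseteq> I"
proof
  fix g assume "g \<in> J"
  thus "g \<in> I"
  proof (induction "LM g" arbitrary: g rule: wf_induct_rule[OF wf_key])
    case (1 g)
    show ?case
    proof (cases "g = (\<lambda>_. 0)")
      case True thus ?thesis using I by (simp add: pideal_def)
    next
      case False
      have finG: "finite (supp g)" using J 1(2) by (simp add: pideal_def is_poly_supp)
      have "LM g \<in> LMs J" using 1(2) False by (auto simp: LMs_def)
      then obtain f where f: "f \<in> I" "f \<noteq> (\<lambda>_. 0)" "LM f = LM g" using L by (auto simp: LMs_def)
      have finF: "finite (supp f)" using I f by (simp add: pideal_def is_poly_supp)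
      define c where "c = g (LM g) / f (LM f)"
      define h where "h = (\<lambda>m. g m - c * f m)"
      have fJ: "f \<in> J" using f sub by blast
      have cfI: "(\<lambda>m. c * f m) \<in> I" using I f by (simp add: pideal_def)
      have hJ: "h \<in> J" unfolding h_def using J fJ 1(2) by (simp add: pideal_def)
      have fLM: "f (LM g) \<noteq> 0" using LM_props(1)[OF finF supp_ne[OF f(2)]] f(3) by (simp add: supp_def)
      have h0: "h (LM g) = 0" unfolding h_def c_def using fLM f(3) by simp
      have "h \<in> I"
      proof (cases "h = (\<lambda>_. 0)")
        case True thus ?thesis using I by (simp add: pideal_def)
      next
        case hne: False
        have suph: "supp h \<subseteq> supp g \<union> supp f" by (auto simp: h_def supp_def)
        have finH: "finite (supp h)" using suph finG finF finite_subset by blast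
        have "LM h \<in> supp h" using LM_props(1)[OF finH supp_ne[OF hne]] .
        hence LMh: "LM h \<noteq> LM g" "LM h \<in> supp g \<union> supp f" using h0 suph by (auto simp: supp_def)
        have "key (LM h) \<le> key (LM g)"
          using LMh(2) LM_props(2)[OF finG supp_ne[OF False]] LM_props(2)[OF finF supp_ne[OF f(2)]] f(3)
          by auto
        hence "key (LM h) < key (LM g)" using LMh(1) key_inj by (metis order.order_iff_strict)
        thus ?thesis using 1(1) hJ by blast
      qed
      have "g = (\<lambda>m. h m + c * f m)" by (simp add: h_def)
      thus ?thesis using pideal_add[OF I \<open>h \<in> I\<close> cfI] by simp
    qed
  qed
qed

lemma pideal_acc:
  fixes I :: "nat \<Rightarrow> (('n::finite \<Rightarrow> nat) \<Rightarrow> 'k::field) set"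
  assumes "\<And>k. pideal (I k)" "\<And>k. I k \<subseteq> I (Suc k)"
  shows "\<not> (\<forall>k. I k \<subset> I (Suc k))"
proof
  assume strict: "\<forall>k. I k \<subset> I (Suc k)"
  have "\<And>k. LMs (I k) \<subseteq> LMs (I (Suc k))" using assms(2) unfolding LMs_def by blast
  moreover have "\<And>k m m'. m \<in> LMs (I k) \<Longrightarrow> (\<forall>x. m x \<le> m' x) \<Longrightarrow> m' \<in> LMs (I k)"
    using LMs_up assms(1) by blast
  ultimately have "\<not> (\<forall>k. LMs (I k) \<subset> LMs (I (Suc k)))" by (rule upclosed_acc)
  then obtain k where "\<not> LMs (I k) \<subset> LMs (I (Suc k))" by blast
  hence "LMs (I (Suc k)) \<subseteq> LMs (I k)" using \<open>\<And>k. LMs (I k) \<subseteq> LMs (I (Suc k))\<close> by blast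
  hence "I (Suc k) \<subseteq> I k" using pideal_eq assms by blast
  thus False using strict by blast
qed

definition vanish :: "(('n::finite \<Rightarrow> nat) \<Rightarrow> 'k::field) set \<Rightarrow> ('n \<Rightarrow> 'k) set set" where
  "vanish F = {p \<in> PV. \<forall>f\<in>F. \<forall>v\<in>p. peval f v = 0}"

lemma proj_closed_vanish: "proj_closed Z \<longleftrightarrow> (\<exists>F. (\<forall>f\<in>F. homogeneous f) \<and> Z = vanish F)"
  by (simp add: proj_closed_def vanish_def)

lemma smul_smul: "smul c (smul d v) = smul (c * d) v"
  by (simp add: smul_def fun_eq_iff mult.assoc)

lemma smul_one: "smul 1 v = v"
  by (simp add: smul_def)

lemma in_proj_pt_self: "v \<in> proj_pt v"
  unfolding proj_pt_def mem_Collect_eq by (rule exI[where x=1]) (simp add: smul_one)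

lemma PV_E: "p \<in> PV \<Longrightarrow> (\<And>v. v \<noteq> (\<lambda>_. 0) \<Longrightarrow> p = proj_pt v \<Longrightarrow> thesis) \<Longrightarrow> thesis"
  unfolding PV_def by blast

lemma proj_pt_in_PV: "v \<noteq> (\<lambda>_. 0) \<Longrightarrow> proj_pt v \<in> PV"
  unfolding PV_def by blast

lemma smul_nonzero: "c \<noteq> 0 \<Longrightarrow> v \<noteq> (\<lambda>_. 0) \<Longrightarrow> smul c v \<noteq> (\<lambda>_. 0)"
  by (auto simp: smul_def fun_eq_iff)

lemma proj_pt_smul: "c \<noteq> 0 \<Longrightarrow> proj_pt (smul c v) = proj_pt v"
proof -
  assume c: "c \<noteq> 0"
  show ?thesis
  proof (rule set_eqI)
    fix u
    show "u \<in> proj_pt (smul c v) \<longleftrightarrow> u \<in> proj_pt v"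
    proof
      assume "u \<in> proj_pt (smul c v)"
      then obtain d where "d \<noteq> 0" "u = smul d (smul c v)" by (auto simp: proj_pt_def)
      thus "u \<in> proj_pt v" using c by (auto simp: proj_pt_def smul_smul)
    next
      assume "u \<in> proj_pt v"
      then obtain d where d: "d \<noteq> 0" "u = smul d v" by (auto simp: proj_pt_def)
      hence "u = smul (d / c) (smul c v)" using c by (simp add: smul_smul)
      thus "u \<in> proj_pt (smul c v)" using c d by (auto simp: proj_pt_def)
    qed
  qed
qed

lemma hom_vanish:
  assumes "homogeneous f"
  shows "(\<forall>u\<in>proj_pt v. peval f u = 0) \<longleftrightarrow> peval f v = 0"
proof -
  obtain d where d: "hdeg f d" using assms homogeneous_hdeg by blast
  show ?thesis
    using in_proj_pt_self[of v] by (auto simp: proj_pt_def peval_smul_hdeg[OF d])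
qed

lemma vanish_pt:
  assumes "\<forall>f\<in>F. homogeneous f" "v \<noteq> (\<lambda>_. 0)"
  shows "proj_pt v \<in> vanish F \<longleftrightarrow> (\<forall>f\<in>F. peval f v = 0)"
  using assms hom_vanish proj_pt_in_PV unfolding vanish_def by blast

lemma closed_sub_PV: "proj_closed Z \<Longrightarrow> Z \<subseteq> PV"
  by (auto simp: proj_closed_def)

lemma closed_PV: "proj_closed PV"
  unfolding proj_closed_def by (rule exI[where x="{}"]) auto

definition unitm :: "'n \<Rightarrow> ('n \<Rightarrow> nat)" where
  "unitm j = (\<lambda>i. if i = j then 1 else 0)"

definition coordp :: "'n::finite \<Rightarrow> (('n \<Rightarrow> nat) \<Rightarrow> 'k::field)" where
  "coordp j = (\<lambda>m. if m = unitm j then 1 else 0)"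

lemma supp_coordp: "supp (coordp j) = {unitm j}"
  by (auto simp: supp_def coordp_def)

lemma peval_coordp: "peval (coordp j) v = v j"
proof -
  have "peval (coordp j) v = mon (unitm j) v" unfolding peval_supp supp_coordp by (simp add: coordp_def)
  also have "\<dots> = (\<Prod>i\<in>UNIV. if i = j then v i else 1)"
    unfolding mon_def unitm_def by (intro prod.cong) auto
  also have "\<dots> = v j" by (simp add: prod.delta)
  finally show ?thesis .
qed

lemma homogeneous_coordp: "homogeneous (coordp j)"
proof -
  have "hdeg (coordp j) 1"
    unfolding hdeg_def is_poly_supp supp_coordp
    by (auto simp: coordp_def deg_def unitm_def)
  thus ?thesis using homogeneous_hdeg by blast
qed

lemma closed_empty: "proj_closed ({} :: ('n::finite \<Rightarrow> 'k::field) set set)"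
proof -
  let ?F = "range coordp :: (('n \<Rightarrow> nat) \<Rightarrow> 'k) set"
  have h: "\<forall>f\<in>?F. homogeneous f" using homogeneous_coordp by blast
  have "vanish ?F = {}"
  proof (rule equals0I)
    fix p assume p: "p \<in> vanish ?F"
    hence "p \<in> PV" by (simp add: vanish_def)
    then obtain v where v: "v \<noteq> (\<lambda>_. 0)" "p = proj_pt v" by (rule PV_E)
    hence "\<forall>f\<in>?F. peval f v = 0" using vanish_pt[OF h v(1)] p by simp
    hence "\<forall>j. v j = 0" by (simp add: peval_coordp)
    thus False using v(1) by auto
  qed
  thus ?thesis unfolding proj_closed_vanish using h by metis
qed

lemma closed_Inter:
  fixes \<Z> :: "('n::finite \<Rightarrow> 'k::field) set set set"
  assumes "\<Z> \<noteq> {}" "\<forall>Z\<in>\<Z>. proj_closed Z"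
  shows "proj_closed (\<Inter>\<Z>)"
proof -
  have "\<forall>Z\<in>\<Z>. \<exists>F. (\<forall>f\<in>F. homogeneous f) \<and> Z = vanish F"
    using assms(2) proj_closed_vanish by blast
  then obtain Fs where Fs: "\<forall>Z\<in>\<Z>. (\<forall>f\<in>Fs Z. homogeneous f) \<and> Z = vanish (Fs Z)"
    by metis
  let ?F = "\<Union>Z\<in>\<Z>. Fs Z"
  have "\<Inter>\<Z> = vanish ?F"
  proof (rule set_eqI)
    fix p
    have "p \<in> \<Inter>\<Z> \<longleftrightarrow> (\<forall>Z\<in>\<Z>. p \<in> vanish (Fs Z))" using Fs by auto
    also have "\<dots> \<longleftrightarrow> p \<in> vanish ?F" using assms(1) by (auto simp: vanish_def)
    finally show "p \<in> \<Inter>\<Z> \<longleftrightarrow> p \<in> vanish ?F" .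
  qed
  moreover have "\<forall>f\<in>?F. homogeneous f" using Fs by blast
  ultimately show ?thesis unfolding proj_closed_vanish by blast
qed

lemma closed_Int: "proj_closed A \<Longrightarrow> proj_closed B \<Longrightarrow> proj_closed (A \<inter> B)"
  using closed_Inter[of "{A, B}"] by simp

lemma closed_Un:
  fixes A :: "('n::finite \<Rightarrow> 'k::field) set set"
  assumes "proj_closed A" "proj_closed B"
  shows "proj_closed (A \<union> B)"
proof -
  obtain F where F: "\<forall>f\<in>F. homogeneous f" "A = vanish F" using assms(1) proj_closed_vanish by blast
  obtain G where G: "\<forall>f\<in>G. homogeneous f" "B = vanish G" using assms(2) proj_closed_vanish by blast
  let ?H = "{pmult f g | f g. f \<in> F \<and> g \<in> G}"
  have H: "\<forall>h\<in>?H. homogeneous h" using F G homogeneous_pmult by blast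
  have "A \<union> B = vanish ?H"
  proof (rule set_eqI)
    fix p
    show "p \<in> A \<union> B \<longleftrightarrow> p \<in> vanish ?H"
    proof (cases "p \<in> PV")
      case False thus ?thesis using F G by (auto simp: vanish_def)
    next
      case True
      then obtain v where v: "v \<noteq> (\<lambda>_. 0)" "p = proj_pt v" by (rule PV_E)
      have ev: "\<And>f g. f \<in> F \<Longrightarrow> g \<in> G \<Longrightarrow> peval (pmult f g) v = peval f v * peval g v"
        using F G by (intro peval_pmult) (auto simp: homogeneous_def)
      have "p \<in> vanish ?H \<longleftrightarrow> (\<forall>h\<in>?H. peval h v = 0)" using vanish_pt[OF H v(1)] v(2) by simp
      also have "\<dots> \<longleftrightarrow> (\<forall>f\<in>F. \<forall>g\<in>G. peval (pmult f g) v = 0)" by blast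
      also have "\<dots> \<longleftrightarrow> (\<forall>f\<in>F. \<forall>g\<in>G. peval f v * peval g v = 0)" using ev by simp
      also have "\<dots> \<longleftrightarrow> (\<forall>f\<in>F. peval f v = 0) \<or> (\<forall>g\<in>G. peval g v = 0)" by (metis mult_eq_0_iff)
      also have "\<dots> \<longleftrightarrow> p \<in> A \<union> B" using vanish_pt[OF F(1) v(1)] vanish_pt[OF G(1) v(1)] F(2) G(2) v(2) by simp
      finally show ?thesis by simp
    qed
  qed
  thus ?thesis unfolding proj_closed_vanish using H by blast
qed

lemma closed_finite_Union:
  assumes "finite K" "\<forall>Z\<in>K. proj_closed (Z :: ('n::finite \<Rightarrow> 'k::field) set set)"
  shows "proj_closed (\<Union>K)"
  using assms by (induction K rule: finite_induct) (auto simp: closed_empty closed_Un)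

lemma pcl_sub: "A \<subseteq> pclosure A"
  by (auto simp: pclosure_def)

lemma pcl_min: "proj_closed Z \<Longrightarrow> A \<subseteq> Z \<Longrightarrow> pclosure A \<subseteq> Z"
  by (auto simp: pclosure_def)

lemma pcl_mono: "A \<subseteq> B \<Longrightarrow> pclosure A \<subseteq> pclosure B"
  by (auto simp: pclosure_def)

lemma pcl_closed: "A \<subseteq> PV \<Longrightarrow> proj_closed (pclosure A)"
  unfolding pclosure_def by (rule closed_Inter) (use closed_PV in auto)

lemma pcl_empty: "pclosure {} = ({} :: ('n::finite \<Rightarrow> 'k::field) set set)"
  using pcl_min[OF closed_empty, of "{}"] by auto

lemma pcl_Union_finite:
  fixes A :: "'c \<Rightarrow> ('n::finite \<Rightarrow> 'k::field) set set"
  assumes "finite K" "\<forall>C\<in>K. A C \<subseteq> PV"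
  shows "pclosure (\<Union>C\<in>K. A C) = (\<Union>C\<in>K. pclosure (A C))"
proof
  show "(\<Union>C\<in>K. pclosure (A C)) \<subseteq> pclosure (\<Union>C\<in>K. A C)"
    by (intro UN_least pcl_mono) auto
  have "proj_closed (\<Union>C\<in>K. pclosure (A C))"
    using assms by (intro closed_finite_Union) (auto intro: pcl_closed)
  moreover have "(\<Union>C\<in>K. A C) \<subseteq> (\<Union>C\<in>K. pclosure (A C))" using pcl_sub by blast
  ultimately show "pclosure (\<Union>C\<in>K. A C) \<subseteq> (\<Union>C\<in>K. pclosure (A C))" by (rule pcl_min)
qed

section \<open>Noetherian\<close>

definition Ival :: "('n::finite \<Rightarrow> 'k::field) set set \<Rightarrow> (('n \<Rightarrow> nat) \<Rightarrow> 'k) set" where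
  "Ival Z = {f. is_poly f \<and> (\<forall>p\<in>Z. \<forall>v\<in>p. peval f v = 0)}"

lemma peval_diff:
  assumes "is_poly f" "is_poly g"
  shows "peval (\<lambda>m. f m - g m) v = peval f v - peval g v"
proof -
  let ?S = "supp f \<union> supp g"
  have fin: "finite ?S" using assms by (simp add: is_poly_supp)
  have "peval (\<lambda>m. f m - g m) v = (\<Sum>m\<in>?S. (f m - g m) * mon m v)"
    by (rule peval_superset[OF fin]) (auto simp: supp_def)
  also have "\<dots> = (\<Sum>m\<in>?S. f m * mon m v) - (\<Sum>m\<in>?S. g m * mon m v)"
    by (simp add: left_diff_distrib sum_subtractf)
  also have "\<dots> = peval f v - peval g v"
    using peval_superset[OF fin, of f v] peval_superset[OF fin, of g v] by simp
  finally show ?thesis .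
qed

lemma peval_scale:
  assumes "is_poly f"
  shows "peval (\<lambda>m. c * f m) v = c * peval f v"
proof -
  have fin: "finite (supp f)" using assms by (simp add: is_poly_supp)
  have "peval (\<lambda>m. c * f m) v = (\<Sum>m\<in>supp f. c * f m * mon m v)"
    by (rule peval_superset[OF fin]) (auto simp: supp_def)
  thus ?thesis by (simp add: peval_supp sum_distrib_left mult.assoc)
qed

lemma pideal_Ival: "pideal (Ival Z)"
  unfolding pideal_def
proof (intro conjI ballI allI)
  show "\<And>f. f \<in> Ival Z \<Longrightarrow> is_poly f" by (simp add: Ival_def)
  show "(\<lambda>_. 0) \<in> Ival Z" by (simp add: Ival_def is_poly_def peval_def)
  fix f assume f: "f \<in> Ival Z"
  hence fp: "is_poly f" by (simp add: Ival_def)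
  {
    fix g assume g: "g \<in> Ival Z"
    hence gp: "is_poly g" by (simp add: Ival_def)
    have "is_poly (\<lambda>m. f m - g m)" using fp gp unfolding is_poly_supp
      by (rule_tac finite_subset[of _ "supp f \<union> supp g"]) (auto simp: supp_def)
    thus "(\<lambda>m. f m - g m) \<in> Ival Z" using f g by (auto simp: Ival_def peval_diff[OF fp gp])
  }
  fix c
  have "is_poly (\<lambda>m. c * f m)" using fp unfolding is_poly_supp
    by (rule_tac finite_subset[of _ "supp f"]) (auto simp: supp_def)
  thus "(\<lambda>m. c * f m) \<in> Ival Z" using f by (auto simp: Ival_def peval_scale[OF fp])
next
  fix f a assume f: "f \<in> Ival Z"
  hence fp: "is_poly f" by (simp add: Ival_def)
  have "is_poly (shift a f)" using fp by (simp add: is_poly_supp supp_shift)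
  thus "shift a f \<in> Ival Z" using f by (auto simp: Ival_def peval_shift[OF fp])
qed

lemma noetherian: "wf {(A :: ('n::finite \<Rightarrow> 'k::field) set set, B). proj_closed A \<and> proj_closed B \<and> A \<subset> B}"
proof (rule ccontr)
  assume "\<not> ?thesis"
  then obtain Z :: "nat \<Rightarrow> ('n \<Rightarrow> 'k) set set" where Z: "\<And>i. proj_closed (Z i) \<and> proj_closed (Z (Suc i)) \<and> Z (Suc i) \<subset> Z i"
    unfolding wf_iff_no_infinite_down_chain by auto
  let ?I = "\<lambda>i. Ival (Z i)"
  have sub: "\<And>k. ?I k \<subseteq> ?I (Suc k)" using Z unfolding Ival_def by blast
  have "\<forall>k. ?I k \<subset> ?I (Suc k)"
  proof
    fix k
    show "?I k \<subset> ?I (Suc k)"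
    proof (rule ccontr)
      assume "\<not> ?I k \<subset> ?I (Suc k)"
      hence eq: "?I (Suc k) \<subseteq> ?I k" using sub by blast
      have "proj_closed (Z (Suc k))" using Z[of k] by (elim conjE)
      then obtain F where F: "\<forall>f\<in>F. homogeneous f" "Z (Suc k) = vanish F"
        unfolding proj_closed_vanish by (elim exE conjE) (rule that; assumption)
      have "F \<subseteq> ?I (Suc k)" using F by (auto simp: Ival_def homogeneous_def vanish_def)
      hence "F \<subseteq> ?I k" using eq by blast
      moreover have "Z k \<subseteq> PV" by (rule closed_sub_PV) (use Z[of k] in blast)
      ultimately have "Z k \<subseteq> vanish F" by (auto simp: Ival_def vanish_def)
      thus False using F(2) Z[of k] by blast
    qed
  qed
  thus False using pideal_acc[of ?I] pideal_Ival sub by blast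
qed

lemma decomp:
  fixes Z :: "('n::finite \<Rightarrow> 'k::field) set set"
  shows "proj_closed Z \<Longrightarrow> \<exists>D. finite D \<and> (\<forall>d\<in>D. proj_irreducible d) \<and> \<Union>D = Z"
proof (induction Z rule: wf_induct_rule[OF noetherian])
  case (1 Z)
  show ?case
  proof (cases "Z = {}")
    case True thus ?thesis by (intro exI[where x="{}"]) auto
  next
    case ne: False
    show ?thesis
    proof (cases "proj_irreducible Z")
      case True thus ?thesis by (intro exI[where x="{Z}"]) auto
    next
      case False
      have "\<not> (\<forall>A B. proj_closed A \<longrightarrow> proj_closed B \<longrightarrow> Z = A \<union> B \<longrightarrow> Z = A \<or> Z = B)"
      proof
        assume H: "\<forall>A B. proj_closed A \<longrightarrow> proj_closed B \<longrightarrow> Z = A \<union> B \<longrightarrow> Z = A \<or> Z = B"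
        have "proj_irreducible Z" unfolding proj_irreducible_def by (intro conjI 1(2) ne H)
        thus False using False by contradiction
      qed
      then obtain A B where AB: "proj_closed A" "proj_closed B" "Z = A \<union> B" "Z \<noteq> A" "Z \<noteq> B"
        unfolding not_all not_imp de_Morgan_disj by (elim exE conjE) (rule that; assumption)
      have "(A, Z) \<in> {(A, B). proj_closed A \<and> proj_closed B \<and> A \<subset> B}" using AB 1(2) by blast
      hence "\<exists>D. finite D \<and> (\<forall>d\<in>D. proj_irreducible d) \<and> \<Union>D = A" using AB(1) by (rule 1(1))
      then obtain DA where DA: "finite DA" "\<forall>d\<in>DA. proj_irreducible d" "\<Union>DA = A" by (elim exE conjE) (rule that; assumption)
      have "(B, Z) \<in> {(A, B). proj_closed A \<and> proj_closed B \<and> A \<subset> B}" using AB 1(2) by blast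
      hence "\<exists>D. finite D \<and> (\<forall>d\<in>D. proj_irreducible d) \<and> \<Union>D = B" using AB(2) by (rule 1(1))
      then obtain DB where DB: "finite DB" "\<forall>d\<in>DB. proj_irreducible d" "\<Union>DB = B" by (elim exE conjE) (rule that; assumption)
      show ?thesis
        by (rule exI[where x="DA \<union> DB"]) (use DA DB AB(3) in auto)
    qed
  qed
qed

lemma irr_in_union:
  fixes E :: "('n::finite \<Rightarrow> 'k::field) set set"
  assumes E: "proj_irreducible E" and K: "finite K" "\<forall>Z\<in>K. proj_closed Z" and sub: "E \<subseteq> \<Union>K"
  shows "\<exists>Z\<in>K. E \<subseteq> Z"
  using K sub
proof (induction K rule: finite_induct)
  case empty thus ?case using E by (auto simp: proj_irreducible_def)
next
  case (insert Z K)
  have cE: "proj_closed E" using E by (simp add: proj_irreducible_def)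
  have c1: "proj_closed (E \<inter> Z)" using cE insert by (intro closed_Int) auto
  have c2: "proj_closed (E \<inter> \<Union>K)" using cE insert by (intro closed_Int closed_finite_Union) auto
  have "E = (E \<inter> Z) \<union> (E \<inter> \<Union>K)" using insert.prems by blast
  hence "E = E \<inter> Z \<or> E = E \<inter> \<Union>K" using E c1 c2 unfolding proj_irreducible_def by blast
  thus ?case
  proof
    assume "E = E \<inter> Z" thus ?thesis by blast
  next
    assume "E = E \<inter> \<Union>K"
    hence "E \<subseteq> \<Union>K" by blast
    thus ?thesis using insert.IH insert.prems by blast
  qed
qed

lemma components:
  fixes X :: "('n::finite \<Rightarrow> 'k::field) set set"
  assumes X: "proj_closed X"
  shows "finite (irr_components X)" "\<Union>(irr_components X) = X"
    "\<And>C. C \<in> irr_components X \<Longrightarrow> proj_closed C \<and> C \<subseteq> X"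
proof -
  obtain D where D: "finite D" "\<forall>d\<in>D. proj_irreducible d" "\<Union>D = X" using decomp[OF X] by blast
  have Dc: "\<forall>d\<in>D. proj_closed d" using D(2) by (simp add: proj_irreducible_def)
  have inD: "\<exists>d\<in>D. E \<subseteq> d" if "proj_irreducible E" "E \<subseteq> X" for E
    using irr_in_union[OF that(1) D(1) Dc] that(2) D(3) by blast
  have "irr_components X \<subseteq> D"
  proof
    fix C assume C: "C \<in> irr_components X"
    hence Ci: "proj_irreducible C" "C \<subseteq> X" by (auto simp: irr_components_def)
    then obtain d where d: "d \<in> D" "C \<subseteq> d" using inD by blast
    have "d \<subseteq> X" using d D(3) by blast
    hence "d = C" using C d D(2) unfolding irr_components_def by blast
    thus "C \<in> D" using d by simp
  qed
  thus "finite (irr_components X)" using D(1) finite_subset by blast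
  show "\<And>C. C \<in> irr_components X \<Longrightarrow> proj_closed C \<and> C \<subseteq> X"
    by (auto simp: irr_components_def proj_irreducible_def)
  show "\<Union>(irr_components X) = X"
  proof
    show "\<Union>(irr_components X) \<subseteq> X" by (auto simp: irr_components_def)
    show "X \<subseteq> \<Union>(irr_components X)"
    proof
      fix x assume "x \<in> X"
      then obtain d where d: "d \<in> D" "x \<in> d" using D(3) by blast
      let ?M = "{d' \<in> D. d \<subseteq> d'}"
      have fM: "finite ?M" using D(1) by auto
      have neM: "?M \<noteq> {}" using d by auto
      obtain d' where d'1: "d' \<in> ?M" and d'2: "\<forall>b\<in>?M. d' \<le> b \<longrightarrow> d' = b"
        using finite_has_maximal[OF fM neM] by (elim bexE) (rule that; assumption)
      have d': "d' \<in> ?M" "\<And>b. b \<in> ?M \<Longrightarrow> d' \<subseteq> b \<Longrightarrow> d' = b" using d'1 d'2 by auto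
      have "d' \<in> irr_components X"
        unfolding irr_components_def mem_Collect_eq
      proof (intro conjI allI impI)
        show "d' \<subseteq> X" using d' D(3) by blast
        show "proj_irreducible d'" using d' D(2) by blast
        fix E assume E: "E \<subseteq> X" "proj_irreducible E" "d' \<subseteq> E"
        then obtain d'' where d'': "d'' \<in> D" "E \<subseteq> d''" using inD by blast
        hence "d'' \<in> ?M" using d' E by blast
        hence "d' = d''" using d'(2) E d'' by blast
        thus "E = d'" using E d'' by blast
      qed
      thus "x \<in> \<Union>(irr_components X)" using d d' by blast
    qed
  qed
qed

definition mu :: "('n \<Rightarrow> 'r::finite \<Rightarrow> int) \<Rightarrow> ('r \<Rightarrow> 'k::field) \<Rightarrow> 'n \<Rightarrow> 'k" where
  "mu w t j = (\<Prod>a\<in>UNIV. t a powi w j a)"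

definition tinv :: "('r \<Rightarrow> 'k::field) \<Rightarrow> ('r \<Rightarrow> 'k)" where
  "tinv t = (\<lambda>a. inverse (t a))"

lemma tact_mu: "tact w t v = (\<lambda>j. mu w t j * v j)"
  by (simp add: tact_def mu_def)

lemma mu_nz: "t \<in> torus \<Longrightarrow> mu w t j \<noteq> 0"
  unfolding mu_def torus_def by (simp add: prod_zero_iff power_int_not_zero)

lemma mu_tinv: "mu w (tinv t) j = inverse (mu w t j)"
  unfolding mu_def tinv_def
  using prod_inversef[of "\<lambda>a. t a powi w j a" UNIV, unfolded comp_def]
  by (simp add: power_int_inverse)

lemma mu_mult: "mu w (\<lambda>a. s a * s' a) j = mu w s j * mu w s' j"
  unfolding mu_def by (simp add: power_int_mult_distrib prod.distrib)

lemma tinv_torus: "t \<in> torus \<Longrightarrow> tinv t \<in> torus"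
  by (simp add: torus_def tinv_def)

lemma tinv_tinv: "tinv (tinv t) = t"
  by (simp add: tinv_def)

lemma tact_tinv: "t \<in> torus \<Longrightarrow> tact w (tinv t) (tact w t v) = v"
  by (simp add: tact_mu mu_tinv mu_nz fun_eq_iff)

lemma tact_mult: "tact w (\<lambda>a. s a * s' a) v = tact w s (tact w s' v)"
  by (simp add: tact_mu mu_mult fun_eq_iff mult.assoc)

lemma tact_smul: "tact w t (smul c v) = smul c (tact w t v)"
  by (simp add: tact_mu smul_def fun_eq_iff mult_ac)

lemma tact_nz: "t \<in> torus \<Longrightarrow> v \<noteq> (\<lambda>_. 0) \<Longrightarrow> tact w t v \<noteq> (\<lambda>_. 0)"
  by (auto simp: tact_mu fun_eq_iff mu_nz)

lemma pact_pt: "pact w t (proj_pt v) = proj_pt (tact w t v)"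
proof -
  have "pact w t (proj_pt v) = (\<lambda>c. tact w t (smul c v)) ` {c. c \<noteq> 0}"
    unfolding pact_def proj_pt_def by (auto simp: image_def)
  also have "\<dots> = (\<lambda>c. smul c (tact w t v)) ` {c. c \<noteq> 0}" by (simp add: tact_smul)
  also have "\<dots> = proj_pt (tact w t v)" unfolding proj_pt_def by (auto simp: image_def)
  finally show ?thesis .
qed

lemma pact_PV: "t \<in> torus \<Longrightarrow> p \<in> PV \<Longrightarrow> pact w t p \<in> PV"
  by (elim PV_E) (simp add: pact_pt proj_pt_in_PV tact_nz)

lemma pact_inv: "t \<in> torus \<Longrightarrow> pact w (tinv t) (pact w t p) = p"
  unfolding pact_def image_image by (simp add: tact_tinv)

lemma pact_inv2: "t \<in> torus \<Longrightarrow> pact w t (pact w (tinv t) p) = p"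
  using pact_inv[OF tinv_torus, of t w p] by (simp add: tinv_tinv)

lemma pact_mult: "pact w (\<lambda>a. s a * s' a) p = pact w s (pact w s' p)"
  unfolding pact_def image_image by (simp add: tact_mult)

lemma image_pact_inv: "t \<in> torus \<Longrightarrow> pact w (tinv t) ` pact w t ` A = A"
  by (simp add: image_image pact_inv)

lemma image_pact_inv2: "t \<in> torus \<Longrightarrow> pact w t ` pact w (tinv t) ` A = A"
  by (simp add: image_image pact_inv2)

lemma mon_mult: "mon m (\<lambda>j. a j * b j) = mon m a * mon m b"
  by (simp add: mon_def power_mult_distrib prod.distrib)

lemma mon_nz: "(\<And>j. a j \<noteq> 0) \<Longrightarrow> mon m a \<noteq> (0::'k::field)"
  by (simp add: mon_def prod_zero_iff)

lemma closed_image: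
  fixes Z :: "('n::finite \<Rightarrow> 'k::field) set set" and t :: "'r::finite \<Rightarrow> 'k"
  assumes t: "t \<in> torus" and Z: "proj_closed Z"
  shows "proj_closed (pact w t ` Z)"
proof -
  obtain F where F: "\<forall>f\<in>F. homogeneous f" "Z = vanish F" using Z proj_closed_vanish by blast
  define tw where "tw f = (\<lambda>m. f m * inverse (mon m (mu w t)))" for f :: "('n \<Rightarrow> nat) \<Rightarrow> 'k"
  have Mnz: "\<And>m. mon m (mu w t) \<noteq> 0" using mu_nz[OF t] by (intro mon_nz)
  have supp_tw: "supp (tw f) = supp f" for f using Mnz by (auto simp: supp_def tw_def)
  have ev: "peval (tw f) (tact w t v) = peval f v" for f v
  proof -
    have "peval (tw f) (tact w t v) = (\<Sum>m\<in>supp f. tw f m * mon m (tact w t v))"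
      by (simp add: peval_supp supp_tw)
    also have "\<dots> = (\<Sum>m\<in>supp f. f m * mon m v)"
      by (intro sum.cong refl) (simp add: tw_def tact_mu mon_mult Mnz)
    finally show ?thesis by (simp add: peval_supp)
  qed
  have hom: "\<forall>g\<in>tw ` F. homogeneous g"
  proof
    fix g assume "g \<in> tw ` F"
    then obtain f where f: "f \<in> F" "g = tw f" by blast
    have fh: "homogeneous f" using F f by blast
    have "\<And>m. g m \<noteq> 0 \<longleftrightarrow> f m \<noteq> 0" using f Mnz by (simp add: tw_def)
    thus "homogeneous g" using fh unfolding homogeneous_def is_poly_def by simp
  qed
  have "pact w t ` Z = vanish (tw ` F)"
  proof
    show "pact w t ` Z \<subseteq> vanish (tw ` F)"
    proof
      fix q assume "q \<in> pact w t ` Z"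
      then obtain p where p: "p \<in> Z" "q = pact w t p" by blast
      have "p \<in> PV" using p F by (simp add: vanish_def)
      then obtain v where v: "v \<noteq> (\<lambda>_. 0)" "p = proj_pt v" by (rule PV_E)
      have "\<forall>f\<in>F. peval f v = 0" using vanish_pt[OF F(1) v(1)] p(1) v(2) F(2) by simp
      hence "\<forall>g\<in>tw ` F. peval g (tact w t v) = 0" by (simp add: ev)
      hence "proj_pt (tact w t v) \<in> vanish (tw ` F)" using vanish_pt[OF hom tact_nz[OF t v(1)]] by simp
      thus "q \<in> vanish (tw ` F)" using p(2) v(2) by (simp add: pact_pt)
    qed
    show "vanish (tw ` F) \<subseteq> pact w t ` Z"
    proof
      fix q assume q: "q \<in> vanish (tw ` F)"
      hence "q \<in> PV" by (simp add: vanish_def)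
      then obtain u where u: "u \<noteq> (\<lambda>_. 0)" "q = proj_pt u" by (rule PV_E)
      define v where "v = tact w (tinv t) u"
      have uv: "u = tact w t v" unfolding v_def using tact_tinv[OF tinv_torus[OF t], of w u] by (simp add: tinv_tinv)
      have vnz: "v \<noteq> (\<lambda>_. 0)" unfolding v_def using tact_nz[OF tinv_torus[OF t] u(1)] .
      have "\<forall>g\<in>tw ` F. peval g u = 0" using vanish_pt[OF hom u(1)] q u(2) by simp
      hence "\<forall>f\<in>F. peval f v = 0" using uv ev by simp
      hence "proj_pt v \<in> Z" using vanish_pt[OF F(1) vnz] F(2) by simp
      moreover have "q = pact w t (proj_pt v)" using u(2) uv by (simp add: pact_pt)
      ultimately show "q \<in> pact w t ` Z" by blast
    qed
  qed
  thus ?thesis unfolding proj_closed_vanish using hom by blast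
qed

lemma irr_image:
  fixes C :: "('n::finite \<Rightarrow> 'k::field) set set" and t :: "'r::finite \<Rightarrow> 'k"
  assumes t: "t \<in> torus" and C: "proj_irreducible C"
  shows "proj_irreducible (pact w t ` C)"
  unfolding proj_irreducible_def
proof (intro conjI allI impI)
  show "proj_closed (pact w t ` C)" using C t closed_image by (auto simp: proj_irreducible_def)
  show "pact w t ` C \<noteq> {}" using C by (auto simp: proj_irreducible_def)
  fix A B assume A: "proj_closed A" and B: "proj_closed B" and AB: "pact w t ` C = A \<union> B"
  have "C = pact w (tinv t) ` A \<union> pact w (tinv t) ` B"
    using arg_cong[OF AB, of "image (pact w (tinv t))"] image_pact_inv[OF t, of w C] by (simp add: image_Un)
  moreover have "proj_closed (pact w (tinv t) ` A)" "proj_closed (pact w (tinv t) ` B)"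
    using closed_image[OF tinv_torus[OF t]] A B by auto
  ultimately have "C = pact w (tinv t) ` A \<or> C = pact w (tinv t) ` B"
    using C unfolding proj_irreducible_def by blast
  thus "pact w t ` C = A \<or> pact w t ` C = B"
    using image_pact_inv2[OF t, of w A] image_pact_inv2[OF t, of w B] by auto
qed

lemma comp_image:
  fixes X :: "('n::finite \<Rightarrow> 'k::field) set set" and t :: "'r::finite \<Rightarrow> 'k"
  assumes t: "t \<in> torus" and X: "T_invariant w X" and C: "C \<in> irr_components X"
  shows "pact w t ` C \<in> irr_components X"
proof -
  have inv: "\<And>s p. s \<in> (torus :: ('r \<Rightarrow> 'k) set) \<Longrightarrow> p \<in> X \<Longrightarrow> pact w s p \<in> X"
    using X unfolding T_invariant_def by blast
  have Ci: "proj_irreducible C" "C \<subseteq> X" using C by (auto simp: irr_components_def)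
  show ?thesis
    unfolding irr_components_def mem_Collect_eq
  proof (intro conjI allI impI)
    show "pact w t ` C \<subseteq> X" using Ci inv t by blast
    show "proj_irreducible (pact w t ` C)" using irr_image[OF t Ci(1)] .
    fix D assume D: "D \<subseteq> X" "proj_irreducible D" "pact w t ` C \<subseteq> D"
    have "pact w (tinv t) ` D \<subseteq> X" using D inv tinv_torus[OF t] by blast
    moreover have "proj_irreducible (pact w (tinv t) ` D)" using irr_image[OF tinv_torus[OF t] D(2)] .
    moreover have "C \<subseteq> pact w (tinv t) ` D"
      using image_mono[OF D(3), of "pact w (tinv t)"] image_pact_inv[OF t, of w C] by simp
    ultimately have "pact w (tinv t) ` D = C" using C unfolding irr_components_def by blast
    thus "D = pact w t ` C" using image_pact_inv2[OF t, of w D] by simp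
  qed
qed

lemma Sgrp_torus: "c \<noteq> 0 \<Longrightarrow> Sgrp lam c \<in> torus"
  by (simp add: Sgrp_def torus_def power_int_not_zero)

lemma Sgrp_mult: "Sgrp lam (c * d) = (\<lambda>a. Sgrp lam c a * Sgrp lam d a)"
  by (simp add: Sgrp_def power_int_mult_distrib)

lemma alg_closed_infinite:
  assumes "alg_closed TYPE('k::field)"
  shows "infinite (UNIV :: 'k set)"
proof
  assume fin: "finite (UNIV :: 'k set)"
  define q :: "'k poly" where "q = (\<Prod>a\<in>UNIV. [:-a, 1:])"
  have "degree q = (\<Sum>a\<in>(UNIV::'k set). degree [:-a, 1:])"
    unfolding q_def by (rule degree_prod_eq_sum_degree) auto
  also have "\<dots> = card (UNIV :: 'k set)" by simp
  finally have dq: "degree q = card (UNIV :: 'k set)" .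
  have "card (UNIV :: 'k set) > 0" using fin by (simp add: card_gt_0_iff)
  hence dq0: "degree q > 0" using dq by simp
  have "degree (1 + q) = degree q" by (rule degree_add_eq_right) (use dq0 in simp)
  hence "0 < degree (1 + q)" using dq0 by simp
  then obtain x where "poly (1 + q) x = 0" using assms unfolding alg_closed_def by blast
  moreover have "poly q x = 0" unfolding q_def poly_prod using fin by (simp add: prod_zero_iff)
  ultimately show False by simp
qed

lemma alg_closed_root:
  assumes "alg_closed TYPE('k::field)" "N > 0"
  shows "\<exists>h::'k. h ^ N = c"
proof -
  define p :: "'k poly" where "p = monom 1 N + [:-c:]"
  have "degree p = N" unfolding p_def using assms(2)
    by (subst degree_add_eq_left) (auto simp: degree_monom_eq)
  then obtain h where "poly p h = 0" using assms unfolding alg_closed_def by blast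
  hence "h ^ N = c" by (simp add: p_def poly_monom)
  thus ?thesis by blast
qed

lemma pact_one:
  fixes p :: "('n \<Rightarrow> 'k::field) set" and w :: "'n \<Rightarrow> 'r::finite \<Rightarrow> int"
  shows "pact w (\<lambda>_. 1) p = p"
proof -
  have "tact w (\<lambda>_. 1) = (\<lambda>v::'n\<Rightarrow>'k. v)" by (simp add: tact_def fun_eq_iff)
  thus ?thesis by (simp add: pact_def)
qed

lemma Sgrp_one: "Sgrp lam 1 = (\<lambda>_. 1)"
  by (simp add: Sgrp_def fun_eq_iff)

lemma funpow_pact:
  "((\<lambda>S. pact w (Sgrp lam h) ` S) ^^ n) S = pact w (Sgrp lam (h ^ n)) ` S"
proof (induction n)
  case 0 thus ?case by (simp add: Sgrp_one pact_one)
next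
  case (Suc n)
  have "((\<lambda>S. pact w (Sgrp lam h) ` S) ^^ Suc n) S = pact w (Sgrp lam h) ` pact w (Sgrp lam (h ^ n)) ` S"
    using Suc by simp
  also have "\<dots> = pact w (\<lambda>a. Sgrp lam h a * Sgrp lam (h ^ n) a) ` S"
    by (simp add: image_image pact_mult)
  also have "\<dots> = pact w (Sgrp lam (h ^ Suc n)) ` S" by (simp add: Sgrp_mult)
  finally show ?case .
qed

lemma comp_S_inv:
  fixes X :: "('n::finite \<Rightarrow> 'k::field) set set" and w :: "'n \<Rightarrow> 'r::finite \<Rightarrow> int"
  assumes ac: "alg_closed TYPE('k)" and X: "proj_closed X" "T_invariant w X"
    and C: "C \<in> irr_components X" and c: "c \<noteq> 0"
  shows "pact w (Sgrp lam c) ` C = C"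
proof -
  let ?K = "irr_components X"
  have finK: "finite ?K" using components(1)[OF X(1)] .
  have cK: "card ?K > 0" using finK C card_gt_0_iff by blast
  define N where "N = (fact (card ?K) :: nat)"
  have N0: "N > 0" by (simp add: N_def)
  obtain h where h: "h ^ N = c" using alg_closed_root[OF ac N0] by blast
  have h0: "h \<noteq> 0" using h c N0 by auto
  define \<phi> where "\<phi> = (\<lambda>S. pact w (Sgrp lam h) ` S)"
  define A where "A j = (\<phi> ^^ j) C" for j
  have AK: "A j \<in> ?K" for j
    unfolding A_def
  proof (induction j)
    case 0 thus ?case using C by simp
  next
    case (Suc j) thus ?case unfolding \<phi>_def using comp_image[OF Sgrp_torus[OF h0] X(2)] by simp
  qed
  have "inj \<phi>"
  proof (rule injI)
    fix S S' assume "\<phi> S = \<phi> S'"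
    hence "pact w (tinv (Sgrp lam h)) ` \<phi> S = pact w (tinv (Sgrp lam h)) ` \<phi> S'" by simp
    thus "S = S'" unfolding \<phi>_def
      using image_pact_inv[where t="Sgrp lam h" and w=w and A=S, OF Sgrp_torus[OF h0]]
        image_pact_inv[where t="Sgrp lam h" and w=w and A=S', OF Sgrp_torus[OF h0]] by simp
  qed
  hence injf: "inj (\<phi> ^^ i)" for i by (rule inj_fn)
  have "\<not> inj_on A {0..card ?K}"
  proof
    assume "inj_on A {0..card ?K}"
    hence "card (A ` {0..card ?K}) = card ?K + 1" by (simp add: card_image)
    moreover have "card (A ` {0..card ?K}) \<le> card ?K" using AK finK by (intro card_mono) auto
    ultimately show False by simp
  qed
  then obtain i j where ij: "i \<le> card ?K" "j \<le> card ?K" "i < j" "A i = A j"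
    unfolding inj_on_def by (metis atLeastAtMost_iff linorder_neqE_nat)
  define d where "d = j - i"
  have d: "0 < d" "d \<le> card ?K" using ij by (auto simp: d_def)
  have "(\<phi> ^^ i) ((\<phi> ^^ d) C) = (\<phi> ^^ (i + d)) C" by (simp add: funpow_add)
  also have "i + d = j" using ij(3) by (simp add: d_def)
  also have "(\<phi> ^^ j) C = (\<phi> ^^ i) C" using ij(4) by (simp add: A_def)
  finally have "(\<phi> ^^ i) ((\<phi> ^^ d) C) = (\<phi> ^^ i) C" .
  hence Ad: "(\<phi> ^^ d) C = C" using injf[of i] by (simp add: inj_eq)
  have Adq: "(\<phi> ^^ (d * q)) C = C" for q
  proof (induction q)
    case 0 thus ?case by simp
  next
    case (Suc q)
    have "(\<phi> ^^ (d * Suc q)) C = (\<phi> ^^ d) ((\<phi> ^^ (d * q)) C)"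
      by (simp add: funpow_add)
    thus ?case using Suc Ad by simp
  qed
  have "d dvd N" unfolding N_def using d by (intro dvd_fact) auto
  then obtain q where "N = d * q" by blast
  hence "(\<phi> ^^ N) C = C" using Adq by simp
  thus ?thesis unfolding \<phi>_def funpow_pact h .
qed

definition mnv :: "('n::finite \<Rightarrow> 'r::finite \<Rightarrow> int) \<Rightarrow> ('r \<Rightarrow> int) \<Rightarrow> ('n \<Rightarrow> 'k::field) \<Rightarrow> int" where
  "mnv w lam v = Min (sweight w lam ` {j. v j \<noteq> 0})"

definition lead :: "('n::finite \<Rightarrow> 'r::finite \<Rightarrow> int) \<Rightarrow> ('r \<Rightarrow> int) \<Rightarrow> ('n \<Rightarrow> 'k::field) \<Rightarrow> ('n \<Rightarrow> 'k)" where
  "lead w lam v = (\<lambda>j. if sweight w lam j = mnv w lam v then v j else 0)"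

lemma powi_prod:
  fixes c :: "'k::field"
  assumes "c \<noteq> 0" "finite A"
  shows "(\<Prod>a\<in>A. c powi f a) = c powi (\<Sum>a\<in>A. f a)"
  using assms(2) by (induction A rule: finite_induct) (auto simp: power_int_add assms(1))

lemma tact_Sgrp:
  fixes c :: "'k::field"
  assumes "c \<noteq> 0"
  shows "tact w (Sgrp lam c) v = (\<lambda>j. c powi sweight w lam j * v j)"
proof -
  have "mu w (Sgrp lam c) j = c powi sweight w lam j" for j
  proof -
    have "mu w (Sgrp lam c) j = (\<Prod>a\<in>UNIV. c powi (w j a * lam a))"
      unfolding mu_def Sgrp_def
    proof (intro prod.cong refl)
      fix a show "(c powi lam a) powi w j a = c powi (w j a * lam a)"
        using power_int_mult[of c "lam a" "w j a"] by (simp add: mult.commute[of "w j a" "lam a"])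
    qed
    also have "\<dots> = c powi sweight w lam j" by (simp add: powi_prod assms sweight_def)
    finally show ?thesis .
  qed
  thus ?thesis by (simp add: tact_mu)
qed

lemma powi_pow: "(c powi e) ^ n = (c::'k::field) powi (int n * e)"
  using power_int_mult[of c e "int n"] by (simp add: power_int_of_nat mult.commute[of "int n" e])

lemma mon_powi:
  fixes c :: "'k::field"
  assumes "c \<noteq> 0"
  shows "mon m (\<lambda>j. c powi e j * v j) = c powi (\<Sum>j\<in>UNIV. int (m j) * e j) * mon m v"
proof -
  have "mon m (\<lambda>j. c powi e j) = (\<Prod>j\<in>UNIV. c powi (int (m j) * e j))"
    by (simp add: mon_def powi_pow)
  also have "\<dots> = c powi (\<Sum>j\<in>UNIV. int (m j) * e j)" by (simp add: powi_prod assms)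
  finally show ?thesis by (simp add: mon_mult)
qed

lemma mon_zero_iff: "mon m v = 0 \<longleftrightarrow> (\<exists>j. m j > 0 \<and> v j = (0::'k::field))"
  by (auto simp: mon_def prod_zero_iff)

lemma lead_vanish:
  fixes f :: "('n::finite \<Rightarrow> nat) \<Rightarrow> 'k::field" and w :: "'n \<Rightarrow> 'r::finite \<Rightarrow> int"
  assumes inf: "infinite (UNIV :: 'k set)" and hf: "hdeg f d" and v: "v \<noteq> (\<lambda>_. 0)"
    and H: "\<forall>c. c \<noteq> 0 \<longrightarrow> peval f (tact w (Sgrp lam c) v) = 0"
  shows "peval f (lead w lam v) = 0"
proof -
  let ?e = "sweight w lam"
  let ?\<mu> = "mnv w lam v"
  define E where "E m = (\<Sum>j\<in>UNIV. int (m j) * ?e j)" for m :: "'n \<Rightarrow> nat"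
  define a where "a m = f m * mon m v" for m
  define P where "P = (\<Sum>m\<in>supp f. monom (a m) (nat (E m - ?\<mu> * int d)))"
  have finS: "finite (supp f)" using hf by (simp add: hdeg_def is_poly_supp)
  have degm: "m \<in> supp f \<Longrightarrow> deg m = d" for m using hf by (simp add: hdeg_def supp_def)
  have finV: "finite (?e ` {j. v j \<noteq> 0})" by simp
  have mule: "v j \<noteq> 0 \<Longrightarrow> ?\<mu> \<le> ?e j" for j unfolding mnv_def using finV by (intro Min_le) auto
  have sumd: "(\<Sum>j\<in>UNIV. int (m j) * ?\<mu>) = ?\<mu> * int d" if "m \<in> supp f" for m
  proof -
    have "(\<Sum>j\<in>UNIV. int (m j) * ?\<mu>) = (\<Sum>j\<in>UNIV. int (m j)) * ?\<mu>" by (simp add: sum_distrib_right)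
    also have "(\<Sum>j\<in>UNIV. int (m j)) = int d" using degm[OF that] by (simp add: deg_def of_nat_sum[symmetric])
    finally show ?thesis by (simp add: mult.commute)
  qed
  have ge: "?\<mu> * int d \<le> E m" if m: "m \<in> supp f" "mon m v \<noteq> 0" for m
  proof -
    have "\<And>j. int (m j) * ?\<mu> \<le> int (m j) * ?e j"
    proof -
      fix j show "int (m j) * ?\<mu> \<le> int (m j) * ?e j"
      proof (cases "m j = 0")
        case False
        hence "v j \<noteq> 0" using m(2) mon_zero_iff by blast
        thus ?thesis using mule by (intro mult_left_mono) auto
      qed simp
    qed
    hence "(\<Sum>j\<in>UNIV. int (m j) * ?\<mu>) \<le> E m" unfolding E_def by (intro sum_mono) auto
    thus ?thesis using sumd[OF m(1)] by simp
  qed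
  have evalP: "poly P c = 0" if c: "c \<noteq> 0" for c
  proof -
    have "c powi (?\<mu> * int d) * poly P c = (\<Sum>m\<in>supp f. a m * c powi E m)"
      unfolding P_def poly_sum poly_monom sum_distrib_left
    proof (intro sum.cong refl)
      fix m assume m: "m \<in> supp f"
      show "c powi (?\<mu> * int d) * (a m * c ^ nat (E m - ?\<mu> * int d)) = a m * c powi E m"
      proof (cases "a m = 0")
        case False
        hence "mon m v \<noteq> 0" by (simp add: a_def)
        hence g: "?\<mu> * int d \<le> E m" using ge m by blast
        have "c ^ nat (E m - ?\<mu> * int d) = c powi (E m - ?\<mu> * int d)"
          using g by (simp add: power_int_of_nat[symmetric])
        hence "c powi (?\<mu> * int d) * c ^ nat (E m - ?\<mu> * int d) = c powi E m"
          using c by (simp add: power_int_add[symmetric])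
        thus ?thesis by (simp add: mult_ac)
      qed simp
    qed
    also have "\<dots> = peval f (tact w (Sgrp lam c) v)"
      unfolding peval_supp tact_Sgrp[OF c] mon_powi[OF c] a_def E_def
      by (intro sum.cong refl) (simp add: mult_ac)
    also have "\<dots> = 0" using H c by blast
    finally show ?thesis using c by (simp add: power_int_not_zero)
  qed
  have "P = 0"
  proof (rule ccontr)
    assume "P \<noteq> 0"
    hence "finite {x. poly P x = 0}" by (rule poly_roots_finite)
    moreover have "UNIV - {0} \<subseteq> {x. poly P x = 0}" using evalP by auto
    ultimately have "finite (UNIV - {0::'k})" using finite_subset by blast
    thus False using inf by simp
  qed
  hence "poly P 0 = 0" by simp
  hence P0: "(\<Sum>m\<in>supp f. a m * 0 ^ nat (E m - ?\<mu> * int d)) = 0"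
    unfolding P_def poly_sum poly_monom by simp
  have "peval f (lead w lam v) = (\<Sum>m\<in>supp f. a m * 0 ^ nat (E m - ?\<mu> * int d))"
    unfolding peval_supp
  proof (intro sum.cong refl)
    fix m assume m: "m \<in> supp f"
    show "f m * mon m (lead w lam v) = a m * 0 ^ nat (E m - ?\<mu> * int d)"
    proof (cases "\<exists>j. m j > 0 \<and> (v j = 0 \<or> ?e j \<noteq> ?\<mu>)")
      case True
      then obtain j where j: "m j > 0" "v j = 0 \<or> ?e j \<noteq> ?\<mu>" by blast
      have "lead w lam v j = 0" using j(2) by (auto simp: lead_def)
      hence L: "mon m (lead w lam v) = 0" using j(1) mon_zero_iff by blast
      show ?thesis
      proof (cases "a m = 0")
        case False
        hence mv: "mon m v \<noteq> 0" by (simp add: a_def)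
        hence vj: "v j \<noteq> 0" using j(1) mon_zero_iff by blast
        hence ej: "?\<mu> < ?e j" using j(2) mule[OF vj] by auto
        have "(\<Sum>i\<in>UNIV. int (m i) * ?\<mu>) < E m"
          unfolding E_def
        proof (rule sum_strict_mono_ex1)
          show "\<forall>i\<in>UNIV. int (m i) * ?\<mu> \<le> int (m i) * ?e i"
          proof
            fix i :: 'n show "int (m i) * ?\<mu> \<le> int (m i) * ?e i"
            proof (cases "m i = 0")
              case False
              hence "v i \<noteq> 0" using mv mon_zero_iff by blast
              thus ?thesis using mule by (intro mult_left_mono) auto
            qed simp
          qed
          show "\<exists>i\<in>UNIV. int (m i) * ?\<mu> < int (m i) * ?e i"
            by (rule bexI[where x=j]) (use ej j(1) in \<open>auto intro: mult_strict_left_mono\<close>)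
        qed simp
        hence "nat (E m - ?\<mu> * int d) > 0" using sumd[OF m] by simp
        thus ?thesis using L by simp
      qed (simp add: L)
    next
      case False
      hence all: "\<And>j. m j > 0 \<Longrightarrow> v j \<noteq> 0 \<and> ?e j = ?\<mu>" by blast
      have "mon m (lead w lam v) = mon m v"
        unfolding mon_def
      proof (intro prod.cong refl)
        fix j show "lead w lam v j ^ m j = v j ^ m j"
          using all[of j] by (cases "m j = 0") (auto simp: lead_def)
      qed
      moreover have "E m = (\<Sum>j\<in>UNIV. int (m j) * ?\<mu>)"
        unfolding E_def
      proof (intro sum.cong refl)
        fix j show "int (m j) * ?e j = int (m j) * ?\<mu>"
          using all[of j] by (cases "m j = 0") auto
      qed
      ultimately show ?thesis using sumd[OF m] by (simp add: a_def)
    qed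
  qed
  thus ?thesis using P0 by simp
qed

lemma lead_nz:
  assumes "v \<noteq> (\<lambda>_. 0)"
  shows "lead w lam v \<noteq> (\<lambda>_. (0::'k::field))"
proof -
  have ne: "{j. v j \<noteq> 0} \<noteq> {}" using assms by auto
  have "mnv w lam v \<in> sweight w lam ` {j. v j \<noteq> 0}"
    unfolding mnv_def using ne by (intro Min_in) auto
  then obtain j where "v j \<noteq> 0" "sweight w lam j = mnv w lam v" by auto
  hence "lead w lam v j \<noteq> 0" by (simp add: lead_def)
  thus ?thesis by auto
qed

lemma S_limit_pt:
  fixes v :: "'n::finite \<Rightarrow> 'k::field"
  assumes v: "v \<noteq> (\<lambda>_. 0)"
  shows "S_limit w lam (proj_pt v) = proj_pt (lead w lam v)"
proof -
  define u where "u = (SOME u. u \<in> proj_pt v)"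
  have "\<exists>u. u \<in> proj_pt v" using in_proj_pt_self by blast
  hence "u \<in> proj_pt v" unfolding u_def by (rule someI_ex)
  then obtain c where c: "c \<noteq> 0" "u = smul c v" by (auto simp: proj_pt_def)
  have supp: "{j. u j \<noteq> 0} = {j. v j \<noteq> 0}" using c by (auto simp: smul_def)
  have "(\<lambda>j. if sweight w lam j = Min (sweight w lam ` {j. u j \<noteq> 0}) then u j else 0)
      = smul c (lead w lam v)"
    unfolding supp by (auto simp: lead_def mnv_def smul_def c(2) fun_eq_iff)
  hence "S_limit w lam (proj_pt v) = proj_pt (smul c (lead w lam v))"
    unfolding S_limit_def Let_def u_def[symmetric] by simp
  thus ?thesis using proj_pt_smul[OF c(1)] by simp
qed

lemma limit_in_closed:
  fixes C :: "('n::finite \<Rightarrow> 'k::field) set set" and w :: "'n \<Rightarrow> 'r::finite \<Rightarrow> int"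
  assumes inf: "infinite (UNIV :: 'k set)" and C: "proj_closed C" and z: "z \<in> C"
    and inv: "\<forall>c. c \<noteq> 0 \<longrightarrow> pact w (Sgrp lam c) z \<in> C"
  shows "S_limit w lam z \<in> C"
proof -
  obtain F where F: "\<forall>f\<in>F. homogeneous f" "C = vanish F" using C proj_closed_vanish by blast
  have "z \<in> PV" using z F by (simp add: vanish_def)
  then obtain v where v: "v \<noteq> (\<lambda>_. 0)" "z = proj_pt v" by (rule PV_E)
  have "\<forall>f\<in>F. peval f (lead w lam v) = 0"
  proof
    fix f assume f: "f \<in> F"
    obtain d where d: "hdeg f d" using F(1) f homogeneous_hdeg by blast
    have "\<forall>c. c \<noteq> 0 \<longrightarrow> peval f (tact w (Sgrp lam c) v) = 0"
    proof (intro allI impI)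
      fix c :: 'k assume c: "c \<noteq> 0"
      have "proj_pt (tact w (Sgrp lam c) v) \<in> vanish F"
        using inv c v(2) F(2) by (simp add: pact_pt)
      thus "peval f (tact w (Sgrp lam c) v) = 0"
        using vanish_pt[OF F(1) tact_nz[where w=w, OF Sgrp_torus[where lam=lam, OF c] v(1)]] f by simp
    qed
    thus "peval f (lead w lam v) = 0" using lead_vanish[OF inf d v(1)] by blast
  qed
  hence "proj_pt (lead w lam v) \<in> C" using vanish_pt[OF F(1) lead_nz[where w=w and lam=lam, OF v(1)]] F(2) by simp
  thus ?thesis using S_limit_pt[where w=w and lam=lam, OF v(1)] v(2) by simp
qed

lemma cc_snoc: "chain_closure w lam Z (fs @ [f]) = pclosure (chain_closure w lam Z fs \<inter> BB_stratum w lam Z f)"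
  by (simp add: chain_closure_def)

lemma cc_nil: "chain_closure w lam Z [] = Z"
  by (simp add: chain_closure_def)

lemma cc_sub: "proj_closed Z \<Longrightarrow> chain_closure w lam Z fs \<subseteq> Z"
proof (induction fs rule: rev_induct)
  case Nil thus ?case by (simp add: cc_nil)
next
  case (snoc f fs)
  thus ?case unfolding cc_snoc by (intro pcl_min) auto
qed

lemma cc_mono:
  assumes "C \<subseteq> X"
  shows "chain_closure w lam C fs \<subseteq> chain_closure w lam X fs"
proof (induction fs rule: rev_induct)
  case Nil thus ?case using assms by (simp add: cc_nil)
next
  case (snoc f fs)
  have "BB_stratum w lam C f \<subseteq> BB_stratum w lam X f" using assms by (auto simp: BB_stratum_def)
  thus ?case unfolding cc_snoc using snoc by (intro pcl_mono) blast
qed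

lemma cc_union:
  fixes X :: "('n::finite \<Rightarrow> 'k::field) set set"
  assumes K: "finite K" "\<Union>K = X" "\<forall>C\<in>K. proj_closed C"
  shows "chain_closure w lam X fs \<subseteq> (\<Union>C\<in>K. chain_closure w lam C fs)"
proof (induction fs rule: rev_induct)
  case Nil thus ?case using K by (simp add: cc_nil)
next
  case (snoc f fs)
  let ?A = "\<lambda>C. chain_closure w lam C fs \<inter> BB_stratum w lam C f"
  have sub: "chain_closure w lam X fs \<inter> BB_stratum w lam X f \<subseteq> (\<Union>C\<in>K. ?A C)"
  proof
    fix x assume x: "x \<in> chain_closure w lam X fs \<inter> BB_stratum w lam X f"
    then obtain C where C: "C \<in> K" "x \<in> chain_closure w lam C fs" using snoc by blast
    have "x \<in> C" using C cc_sub[of C w lam fs] K(3) by blast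
    hence "x \<in> BB_stratum w lam C f" using x by (auto simp: BB_stratum_def)
    thus "x \<in> (\<Union>C\<in>K. ?A C)" using C by blast
  qed
  have PV: "\<forall>C\<in>K. ?A C \<subseteq> PV" using K(3) cc_sub closed_sub_PV by blast
  have "chain_closure w lam X (fs @ [f]) \<subseteq> pclosure (\<Union>C\<in>K. ?A C)"
    unfolding cc_snoc using sub by (rule pcl_mono)
  also have "\<dots> = (\<Union>C\<in>K. pclosure (?A C))" using pcl_Union_finite[OF K(1) PV] .
  finally show ?case unfolding cc_snoc .
qed

lemma cc_fixed:
  assumes C: "proj_closed C" and lim: "\<forall>z\<in>C. S_limit w lam z \<in> C"
  shows "chain_closure w lam C fs \<noteq> {} \<Longrightarrow> set fs \<subseteq> C"
proof (induction fs rule: rev_induct)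
  case Nil thus ?case by simp
next
  case (snoc f fs)
  have "chain_closure w lam C fs \<inter> BB_stratum w lam C f \<noteq> {}"
    using snoc.prems unfolding cc_snoc using pcl_empty by metis
  then obtain z where z: "z \<in> chain_closure w lam C fs" "z \<in> BB_stratum w lam C f" by blast
  have "f \<in> C" using z(2) lim by (auto simp: BB_stratum_def)
  moreover have "set fs \<subseteq> C" using snoc.IH z(1) by blast
  ultimately show ?case by simp
qed

theorem corollary3p1:
  fixes w :: "'n::finite \<Rightarrow> 'r::finite \<Rightarrow> int"
    and lam :: "'r \<Rightarrow> int"
    and X :: "('n \<Rightarrow> 'k::field) set set"
  assumes "alg_closed TYPE('k)"
    and "proj_closed X"
    and "T_invariant w X"
    and "finite (T_fixed w X)"
    and "S_fixed w lam X = T_fixed w X"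
  shows "Delta w lam X = (\<Union>C\<in>irr_components X. Delta w lam C)"
proof -
  note ac = assms(1) and X = assms(2,3)
  let ?K = "irr_components X"
  have K: "finite ?K" "\<Union>?K = X" "\<forall>C\<in>?K. proj_closed C"
    using components[OF X(1)] by auto
  have KX: "\<And>C. C \<in> ?K \<Longrightarrow> C \<subseteq> X" using components(3)[OF X(1)] by blast
  have inf: "infinite (UNIV :: 'k set)" using alg_closed_infinite[OF ac] .
  have lim: "\<forall>z\<in>C. S_limit w lam z \<in> C" if C: "C \<in> ?K" for C
  proof
    fix z assume z: "z \<in> C"
    have "\<forall>c. c \<noteq> 0 \<longrightarrow> pact w (Sgrp lam c) z \<in> C"
      using comp_S_inv[OF ac X C] z by blast
    thus "S_limit w lam z \<in> C" using limit_in_closed[OF inf _ z] K(3) C by blast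
  qed
  have Sfix: "S_fixed w lam C = S_fixed w lam X \<inter> C" if "C \<subseteq> X" for C
    using that by (auto simp: S_fixed_def)
  show ?thesis
  proof
    show "Delta w lam X \<subseteq> (\<Union>C\<in>?K. Delta w lam C)"
    proof
      fix s assume "s \<in> Delta w lam X"
      then obtain fs where fs: "s = set fs" "closure_chain w lam X fs" by (auto simp: Delta_def)
      hence ne: "chain_closure w lam X fs \<noteq> {}" by (simp add: closure_chain_def)
      then obtain C where C: "C \<in> ?K" "chain_closure w lam C fs \<noteq> {}"
        using cc_union[OF K, of w lam fs] by blast
      have "set fs \<subseteq> C" using cc_fixed[OF _ lim[OF C(1)] C(2)] K(3) C(1) by blast
      hence "closure_chain w lam C fs" using fs(2) C Sfix[OF KX[OF C(1)]]
        by (auto simp: closure_chain_def)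
      thus "s \<in> (\<Union>C\<in>?K. Delta w lam C)" using fs(1) C(1) by (auto simp: Delta_def)
    qed
    show "(\<Union>C\<in>?K. Delta w lam C) \<subseteq> Delta w lam X"
    proof
      fix s assume "s \<in> (\<Union>C\<in>?K. Delta w lam C)"
      then obtain C fs where C: "C \<in> ?K" "s = set fs" "closure_chain w lam C fs"
        by (auto simp: Delta_def)
      have "chain_closure w lam C fs \<subseteq> chain_closure w lam X fs" using cc_mono KX[OF C(1)] .
      hence "closure_chain w lam X fs" using C(3) Sfix[OF KX[OF C(1)]]
        by (auto simp: closure_chain_def)
      thus "s \<in> Delta w lam X" using C(2) by (auto simp: Delta_def)
    qed
  qed
qed

end
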